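(* Consider the problem $\min_{x\in\mathbb R^n} f(x)$ subject to $Ax=b$, where $f:\mathbb R^n\to\mathbb R$ is convex and continuously differentiable, $A\in\mathbb R^{m\times n}$, $b\in\mathbb R^m$, and assume the KKT set $\Omega$ is nonempty. Let $\{(x_k,\lambda_k)\}_{k\ge0}$ be generated by the accelerated augmented Lagrangian method described in the context (in either Case I or Case II) with $\rho\in(0,1)$ and $\eta\in(\rho,1)$, and let $(x^*,\lambda^* )\in\Omega$ be the limit of $\{(x_k,\lambda_k)\}_{k\ge0}$. Then, as $k\to+\infty$, $\mathcal L_\beta(x_k,\lambda^* )-\mathcal L_\beta(x^*,\lambda^* )=o(1/t_k^2)$, $\|(x_k,\lambda_k)-(x_{k-1},\lambda_{k-1})\|=o(1/t_k)$, $\|Ax_k-b\|=o(1/t_k^2)$, and $|f(x_k)-f(x^* )|=o(1/t_k^2)$.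
   Context: The KKT set is $\Omega=\{(x^*,\lambda^* )\in\mathbb R^n\times\mathbb R^m: Ax^*=b,\ \nabla f(x^* )+A^\top\lambda^*=0\}$. For $\beta\ge0$, $\mathcal L_\beta(x,\lambda)=f(x)+\langle\lambda,Ax-b\rangle+\frac\beta2\|Ax-b\|^2$. Parameter sequence: $\{t_k\}_{k\ge1}$ is nondecreasing, $t_1=1$, $t_k>1$ for all $k>2$, $t_k\to+\infty$, and $t_{k+1}^2-t_k^2\le\rho t_{k+1}$ for all $k\ge 1$, with fixed $\rho$. Fix $\eta\ge\rho$, $\gamma>0$, $\delta>0$, $\beta\ge0$. Algorithm: initial points $x_0=x_1\in\mathbb R^n$, $\lambda_0=\lambda_1\in\mathbb R^m$. For $k=1,2,\dots$: set $\alpha_k=(t_{k+1}-\eta)/\eta$, $c_k=t_{k+1}/\eta$, $\bar x_k=x_k+\frac{t_k-1}{t_{k+1}}(x_k-x_{k-1})$, $\bar\lambda_k=\lambda_k+\frac{t_k-1}{t_{k+1}}(\lambda_k-\lambda_{k-1})$, $p_k=c_k\bar\lambda_k-\alpha_k\lambda_k$, $r_k=\alpha_kAx_k+b$. Case I ($f$ convex and $C^1$): $x_{k+1}=\arg\min_{x}\{f(x)+\frac\beta2\|Ax-b\|^2+\frac1{2\gamma}\|x-\bar x_k\|^2+\langle p_k,Ax-b\rangle+\frac\delta2\|c_kAx-r_k\|^2\}$. Case II ($f$ convex with $L$-Lipschitz gradient, and $\gamma\le 1/L$): $x_{k+1}=\arg\min_{x}\{\langle\nabla f(\bar x_k),x\rangle+\frac\beta2\|Ax-b\|^2+\frac1{2\gamma}\|x-\bar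 x_k\|^2+\langle p_k,Ax-b\rangle+\frac\delta2\|c_kAx-r_k\|^2\}$. Then $\lambda_{k+1}=\bar\lambda_k+\delta(c_kAx_{k+1}-r_k)$. *)

theory Defs
  imports "HOL-Analysis.Analysis" "HOL-Library.Landau_Symbols"
begin

definition kkt_set ::
  "(real^'n \<Rightarrow> real^'n) \<Rightarrow> real^'n^'m \<Rightarrow> real^'m \<Rightarrow> ((real^'n) \<times> (real^'m)) set" where
  "kkt_set gradf A b = {(x, l). A *v x = b \<and> gradf x + transpose A *v l = 0}"

definition aug_lag ::
  "(real^'n \<Rightarrow> real) \<Rightarrow> real^'n^'m \<Rightarrow> real^'m \<Rightarrow> real \<Rightarrow> real^'n \<Rightarrow> real^'m \<Rightarrow> real" where
  "aug_lag f A b \<beta> x l = f x + l \<bullet> (A *v x - b) + \<beta> / 2 * (norm (A *v x - b))\<^sup>2"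

definition extrap :: "(nat \<Rightarrow> real) \<Rightarrow> (nat \<Rightarrow> 'a::real_vector) \<Rightarrow> nat \<Rightarrow> 'a" where
  "extrap t z k = z k + ((t k - 1) / t (k + 1)) *\<^sub>R (z k - z (k - 1))"

definition alpha_k :: "real \<Rightarrow> (nat \<Rightarrow> real) \<Rightarrow> nat \<Rightarrow> real" where
  "alpha_k \<eta> t k = (t (k + 1) - \<eta>) / \<eta>"

definition c_k :: "real \<Rightarrow> (nat \<Rightarrow> real) \<Rightarrow> nat \<Rightarrow> real" where
  "c_k \<eta> t k = t (k + 1) / \<eta>"

definition p_k :: "real \<Rightarrow> (nat \<Rightarrow> real) \<Rightarrow> (nat \<Rightarrow> real^'m) \<Rightarrow> nat \<Rightarrow> real^'m" where
  "p_k \<eta> t lam k = c_k \<eta> t k *\<^sub>R extrap t lam k - alpha_k \<eta> t k *\<^sub>R lam k"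

definition r_k :: "real \<Rightarrow> (nat \<Rightarrow> real) \<Rightarrow> real^'n^'m \<Rightarrow> real^'m \<Rightarrow> (nat \<Rightarrow> real^'n) \<Rightarrow> nat \<Rightarrow> real^'m" where
  "r_k \<eta> t A b x k = alpha_k \<eta> t k *\<^sub>R (A *v x k) + b"

text \<open>Objective of the x-subproblem at iteration k, with smooth part g
  (Case I: g = f; Case II: g = linearization y \<mapsto> <grad f(xbar_k), y>).\<close>
definition subproblem_obj ::
  "(real^'n \<Rightarrow> real) \<Rightarrow> real^'n^'m \<Rightarrow> real^'m \<Rightarrow> real \<Rightarrow> real \<Rightarrow> real \<Rightarrow> real \<Rightarrow>
   (nat \<Rightarrow> real) \<Rightarrow> (nat \<Rightarrow> real^'n) \<Rightarrow> (nat \<Rightarrow> real^'m) \<Rightarrow> nat \<Rightarrow> real^'n \<Rightarrow> real" where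
  "subproblem_obj g A b \<beta> \<gamma> \<delta> \<eta> t x lam k y =
     g y + \<beta> / 2 * (norm (A *v y - b))\<^sup>2
     + 1 / (2 * \<gamma>) * (norm (y - extrap t x k))\<^sup>2
     + p_k \<eta> t lam k \<bullet> (A *v y - b)
     + \<delta> / 2 * (norm (c_k \<eta> t k *\<^sub>R (A *v y) - r_k \<eta> t A b x k))\<^sup>2"

end

theory Submission
  imports Defs
begin

lemma V_identity:
  fixes z0 z1 z2 zs :: "'a::real_inner" and \<eta> tk \<tau> :: real
  assumes "\<eta> \<noteq> 0"
  shows "2 * \<eta> * inner ((z1 + \<tau> *\<^sub>R (z2 - z1)) - (z0 + tk *\<^sub>R (z1 - z0))) (zs - (z1 + (\<tau> / \<eta>) *\<^sub>R (z2 - z1)))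
   = ((norm (z0 + tk *\<^sub>R (z1 - z0) - zs))\<^sup>2 - (1 - \<eta>) * ((tk - 1) * ((norm (z1 - zs))\<^sup>2 - (norm (z0 - zs))\<^sup>2) + (norm (z1 - zs))\<^sup>2))
   - ((norm (z1 + \<tau> *\<^sub>R (z2 - z1) - zs))\<^sup>2 - (1 - \<eta>) * ((\<tau> - 1) * ((norm (z2 - zs))\<^sup>2 - (norm (z1 - zs))\<^sup>2) + (norm (z2 - zs))\<^sup>2))
   - (norm ((z1 + \<tau> *\<^sub>R (z2 - z1)) - (z0 + tk *\<^sub>R (z1 - z0))))\<^sup>2
   - (1 - \<eta>) * (\<tau> * (norm (z2 - z1))\<^sup>2 + (tk - 1) * (norm (z1 - z0))\<^sup>2)"
proof -
  define a where "a = z0 - zs"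
  define b where "b = z1 - zs"
  define c where "c = z2 - zs"
  have e0: "z0 = a + zs" and e1: "z1 = b + zs" and e2: "z2 = c + zs" by (simp_all add: a_def b_def c_def)
  have h: "2 * \<eta> * inner (zs - (z1 + (\<tau> / \<eta>) *\<^sub>R (z2 - z1))) v = inner ((- 2 * \<eta>) *\<^sub>R b - (2 * \<tau>) *\<^sub>R (c - b)) v" for v
    using assms by (simp add: e1 e2 inner_simps algebra_simps)
  show ?thesis
    apply (subst inner_commute)
    apply (subst h)
    apply (simp add: e0 e1 e2 power2_norm_eq_inner inner_simps algebra_simps inner_commute)
    done
qed

lemma small_s_lemma:
  fixes Z K :: real
  assumes K: "K \<ge> 0" and H: "\<And>s. 0 < s \<Longrightarrow> s \<le> 1 \<Longrightarrow> 0 \<le> s * Z + s\<^sup>2 * K"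
  shows "0 \<le> Z"
proof (rule ccontr)
  assume "\<not> 0 \<le> Z" hence Z: "Z < 0" by simp
  define s where "s = min 1 (- Z / (2 * K + 1))"
  have "0 < - Z / (2 * K + 1)" using Z K by (intro divide_pos_pos) auto
  hence s0: "0 < s" by (simp add: s_def)
  have s1: "s \<le> 1" by (simp add: s_def)
  have "s * K \<le> (- Z / (2 * K + 1)) * K" using K unfolding s_def by (intro mult_right_mono) auto
  also have "\<dots> \<le> - Z / 2"
    using Z K by (simp add: field_simps)
  finally have "Z + s * K < 0" using Z by linarith
  hence "s * (Z + s * K) < 0" using s0 by (simp add: mult_pos_neg)
  moreover have "s * (Z + s * K) = s * Z + s\<^sup>2 * K" by (simp add: power2_eq_square algebra_simps)
  ultimately show False using H[OF s0 s1] by linarith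
qed

lemma norm_add_scale_sq:
  fixes u w :: "'a::real_inner"
  shows "(norm (u + s *\<^sub>R w))\<^sup>2 = (norm u)\<^sup>2 + 2 * s * inner u w + s\<^sup>2 * (norm w)\<^sup>2"
  unfolding power2_norm_eq_inner by (simp add: inner_simps power2_eq_square algebra_simps inner_commute)

lemma quad_min_vi:
  fixes g :: "real^'n \<Rightarrow> real" and A :: "real^'n^'m"
  assumes conv: "convex_on UNIV g" and gam: "\<gamma> > 0" and bet: "\<beta> \<ge> 0" and del: "\<delta> > 0"
  and mn: "\<And>y. g xp + \<beta> / 2 * (norm (A *v xp - b))\<^sup>2 + 1 / (2 * \<gamma>) * (norm (xp - xb))\<^sup>2
              + p \<bullet> (A *v xp - b) + \<delta> / 2 * (norm (c *\<^sub>R (A *v xp) - r))\<^sup>2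
          \<le> g y + \<beta> / 2 * (norm (A *v y - b))\<^sup>2 + 1 / (2 * \<gamma>) * (norm (y - xb))\<^sup>2
              + p \<bullet> (A *v y - b) + \<delta> / 2 * (norm (c *\<^sub>R (A *v y) - r))\<^sup>2"
  shows "0 \<le> g y - g xp + \<beta> * ((A *v xp - b) \<bullet> (A *v (y - xp))) + 1 / \<gamma> * ((xp - xb) \<bullet> (y - xp))
            + p \<bullet> (A *v (y - xp)) + \<delta> * c * ((c *\<^sub>R (A *v xp) - r) \<bullet> (A *v (y - xp)))"
proof -
  define d where "d = y - xp"
  define X where "X = \<beta> * ((A *v xp - b) \<bullet> (A *v d)) + 1 / \<gamma> * ((xp - xb) \<bullet> d)
            + p \<bullet> (A *v d) + \<delta> * c * ((c *\<^sub>R (A *v xp) - r) \<bullet> (A *v d))"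
  define K where "K = \<beta> / 2 * (norm (A *v d))\<^sup>2 + 1 / (2 * \<gamma>) * (norm d)\<^sup>2 + \<delta> / 2 * (norm (c *\<^sub>R (A *v d)))\<^sup>2"
  have K0: "K \<ge> 0" using gam bet del by (simp add: K_def)
  have "0 \<le> (g y - g xp + X)"
  proof (rule small_s_lemma[OF K0])
    fix s :: real assume s0: "0 < s" and s1: "s \<le> 1"
    define ys where "ys = xp + s *\<^sub>R d"
    have ys2: "ys = (1 - s) *\<^sub>R xp + s *\<^sub>R y" by (simp add: ys_def d_def algebra_simps)
    have gc: "g ys \<le> (1 - s) * g xp + s * g y"
      using conv s0 s1 unfolding ys2 by (intro convex_onD) auto
    have Ays: "A *v ys = A *v xp + s *\<^sub>R (A *v d)" by (simp add: ys_def algebra_simps)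
    have q1: "(norm (A *v ys - b))\<^sup>2 = (norm (A *v xp - b))\<^sup>2 + 2 * s * ((A *v xp - b) \<bullet> (A *v d)) + s\<^sup>2 * (norm (A *v d))\<^sup>2"
      using norm_add_scale_sq[of "A *v xp - b" s "A *v d"] by (simp add: Ays algebra_simps)
    have q2: "(norm (ys - xb))\<^sup>2 = (norm (xp - xb))\<^sup>2 + 2 * s * ((xp - xb) \<bullet> d) + s\<^sup>2 * (norm d)\<^sup>2"
      using norm_add_scale_sq[of "xp - xb" s d] by (simp add: ys_def algebra_simps)
    have q3: "(norm (c *\<^sub>R (A *v ys) - r))\<^sup>2 = (norm (c *\<^sub>R (A *v xp) - r))\<^sup>2 + 2 * s * ((c *\<^sub>R (A *v xp) - r) \<bullet> (c *\<^sub>R (A *v d))) + s\<^sup>2 * (norm (c *\<^sub>R (A *v d)))\<^sup>2"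
      using norm_add_scale_sq[of "c *\<^sub>R (A *v xp) - r" s "c *\<^sub>R (A *v d)"] by (simp add: Ays algebra_simps)
    have q4: "p \<bullet> (A *v ys - b) = p \<bullet> (A *v xp - b) + s * (p \<bullet> (A *v d))"
      by (simp add: Ays inner_simps algebra_simps)
    have m: "g xp + \<beta> / 2 * (norm (A *v xp - b))\<^sup>2 + 1 / (2 * \<gamma>) * (norm (xp - xb))\<^sup>2
              + p \<bullet> (A *v xp - b) + \<delta> / 2 * (norm (c *\<^sub>R (A *v xp) - r))\<^sup>2
          \<le> g ys + \<beta> / 2 * (norm (A *v ys - b))\<^sup>2 + 1 / (2 * \<gamma>) * (norm (ys - xb))\<^sup>2
              + p \<bullet> (A *v ys - b) + \<delta> / 2 * (norm (c *\<^sub>R (A *v ys) - r))\<^sup>2" by (rule mn)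
    have e: "\<beta> / 2 * (norm (A *v ys - b))\<^sup>2 + 1 / (2 * \<gamma>) * (norm (ys - xb))\<^sup>2
              + p \<bullet> (A *v ys - b) + \<delta> / 2 * (norm (c *\<^sub>R (A *v ys) - r))\<^sup>2
           = \<beta> / 2 * (norm (A *v xp - b))\<^sup>2 + 1 / (2 * \<gamma>) * (norm (xp - xb))\<^sup>2
              + p \<bullet> (A *v xp - b) + \<delta> / 2 * (norm (c *\<^sub>R (A *v xp) - r))\<^sup>2 + s * X + s\<^sup>2 * K"
      unfolding q1 q2 q3 q4 X_def K_def by (simp add: inner_simps algebra_simps)
    show "0 \<le> s * (g y - g xp + X) + s\<^sup>2 * K"
      using m e gc by (simp add: algebra_simps)
  qed
  thus ?thesis by (simp add: X_def d_def)
qed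

lemma line_deriv:
  fixes f :: "'a::real_inner \<Rightarrow> real"
  assumes fd: "\<And>z. (f has_derivative (\<lambda>h. G z \<bullet> h)) (at z)"
  shows "((\<lambda>s. f (x + s *\<^sub>R d)) has_real_derivative (G (x + s *\<^sub>R d) \<bullet> d)) (at s)"
proof -
  have l: "((\<lambda>s. x + s *\<^sub>R d) has_derivative (\<lambda>h. h *\<^sub>R d)) (at s)"
    by (auto intro!: derivative_eq_intros)
  have "((\<lambda>s. f (x + s *\<^sub>R d)) has_derivative (\<lambda>h. G (x + s *\<^sub>R d) \<bullet> (h *\<^sub>R d))) (at s)"
    using has_derivative_compose[OF l fd] by simp
  hence "((\<lambda>s. f (x + s *\<^sub>R d)) has_derivative (\<lambda>h. h * (G (x + s *\<^sub>R d) \<bullet> d))) (at s)"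
    by (simp add: inner_simps)
  moreover have "(\<lambda>h. h * (G (x + s *\<^sub>R d) \<bullet> d)) = (*) (G (x + s *\<^sub>R d) \<bullet> d)"
    by (rule ext) (simp add: mult.commute)
  ultimately show ?thesis unfolding has_field_derivative_def by simp
qed

lemma convex_grad_ineq:
  fixes f :: "'a::real_inner \<Rightarrow> real"
  assumes conv: "convex_on UNIV f" and fd: "\<And>z. (f has_derivative (\<lambda>h. G z \<bullet> h)) (at z)"
  shows "f y - f x \<ge> G x \<bullet> (y - x)"
proof -
  define d where "d = y - x"
  define \<phi> where "\<phi> = (\<lambda>s::real. f (x + s *\<^sub>R d))"
  have cphi: "convex_on UNIV \<phi>"
  proof (rule convex_onI)
    fix u v :: real and a :: real assume a: "0 < a" "a < 1"
    have "\<phi> ((1 - a) * u + a * v) = f ((1 - a) *\<^sub>R (x + u *\<^sub>R d) + a *\<^sub>R (x + v *\<^sub>R d))"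
      unfolding \<phi>_def by (simp add: algebra_simps)
    also have "\<dots> \<le> (1 - a) * f (x + u *\<^sub>R d) + a * f (x + v *\<^sub>R d)"
      using a by (intro convex_onD[OF conv]) auto
    finally show "\<phi> ((1 - a) *\<^sub>R u + a *\<^sub>R v) \<le> (1 - a) * \<phi> u + a * \<phi> v" by (simp add: \<phi>_def)
  qed auto
  have der: "(\<phi> has_field_derivative (G x \<bullet> d)) (at 0 within UNIV)"
    using line_deriv[OF fd, of x d 0] by (simp add: \<phi>_def)
  have "\<phi> 1 - \<phi> 0 \<ge> (G x \<bullet> d) * (1 - 0)"
    by (rule convex_on_imp_above_tangent[OF cphi]) (use der in auto)
  thus ?thesis by (simp add: \<phi>_def d_def)
qed

lemma descent_lemma:
  fixes f :: "'a::real_inner \<Rightarrow> real"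
  assumes fd: "\<And>z. (f has_derivative (\<lambda>h. G z \<bullet> h)) (at z)"
    and lip: "\<And>u v. norm (G u - G v) \<le> L * norm (u - v)"
  shows "f y \<le> f x + G x \<bullet> (y - x) + L / 2 * (norm (y - x))\<^sup>2"
proof -
  define d where "d = y - x"
  define \<psi> where "\<psi> = (\<lambda>s::real. f (x + s *\<^sub>R d) - s * (G x \<bullet> d) - L / 2 * s\<^sup>2 * (norm d)\<^sup>2)"
  have "\<psi> 1 \<le> \<psi> 0"
  proof (rule DERIV_nonpos_imp_nonincreasing[of 0 1 \<psi>])
    fix s :: real assume s: "0 \<le> s" "s \<le> 1"
    have D: "(\<psi> has_real_derivative (G (x + s *\<^sub>R d) \<bullet> d - G x \<bullet> d - L * s * (norm d)\<^sup>2)) (at s)"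
      unfolding \<psi>_def
      by (rule line_deriv[OF fd] derivative_eq_intros refl | simp add: power2_eq_square)+
    have "G (x + s *\<^sub>R d) \<bullet> d - G x \<bullet> d = (G (x + s *\<^sub>R d) - G x) \<bullet> d" by (simp add: inner_simps)
    also have "\<dots> \<le> norm (G (x + s *\<^sub>R d) - G x) * norm d" by (rule norm_cauchy_schwarz)
    also have "\<dots> \<le> L * norm (s *\<^sub>R d) * norm d"
      using lip[of "x + s *\<^sub>R d" x] by (intro mult_right_mono) auto
    also have "\<dots> = L * s * (norm d)\<^sup>2" using s by (simp add: power2_eq_square)
    finally show "\<exists>y. (\<psi> has_real_derivative y) (at s) \<and> y \<le> 0"
      using D by (intro exI[of _ "G (x + s *\<^sub>R d) \<bullet> d - G x \<bullet> d - L * s * (norm d)\<^sup>2"]) auto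
  qed simp
  thus ?thesis by (simp add: \<psi>_def d_def)
qed

lemma div_contra:
  fixes w :: "nat \<Rightarrow> real"
  assumes w0: "\<And>k. k \<ge> N \<Longrightarrow> 0 \<le> w k" and wl: "\<And>k. k \<ge> N \<Longrightarrow> \<epsilon> / real k \<le> w k"
    and N: "N \<ge> 1" and e: "\<epsilon> > 0" and B: "\<And>K. (\<Sum>k\<in>{N..K}. w k) \<le> B"
  shows False
proof -
  define w' where "w' = (\<lambda>i. w (i + N))"
  have "summable w'"
  proof (rule summableI_nonneg_bounded)
    show "0 \<le> w' n" for n using w0 by (simp add: w'_def)
    show "(\<Sum>i<n. w' i) \<le> B" for n
    proof -
      have "(\<Sum>i<n. w' i) = (\<Sum>k\<in>{N..<n+N}. w k)"
        unfolding w'_def by (rule sum.reindex_bij_witness[of _ "\<lambda>k. k - N" "\<lambda>i. i + N"]) auto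
      also have "{N..<n+N} = {N..n+N-1}" using N by auto
      finally show ?thesis using B by simp
    qed
  qed
  hence "summable (\<lambda>i. (1/\<epsilon>) * w' i)" by (rule summable_mult)
  hence "summable (\<lambda>i. inverse (real (i + N)))"
  proof (rule summable_comparison_test'[where N=0])
    fix i :: nat
    have "\<epsilon> / real (i + N) \<le> w' i" using wl[of "i+N"] by (simp add: w'_def)
    hence "inverse (real (i + N)) \<le> (1/\<epsilon>) * w' i" using e by (simp add: field_simps)
    thus "norm (inverse (real (i + N))) \<le> (1/\<epsilon>) * w' i" by simp
  qed
  hence "summable (\<lambda>i. inverse (real i))" using summable_iff_shift[of "\<lambda>i. inverse (real i)" N] by simp
  thus False using not_summable_harmonic[where 'a=real] by simp
qed

lemma comb_identity:
  fixes P Pn b ls mu :: "'m::real_inner" and xk xn xb xs :: "'n::real_inner"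
  shows "(c-1)*(fk - fn + \<beta>*((Pn - b)\<bullet>(P - Pn)) + g*((xn - xb)\<bullet>(xk - xn)) + mu\<bullet>(P - Pn))
   + (fs - fn + \<beta>*((Pn-b)\<bullet>(b - Pn)) + g*((xn-xb)\<bullet>(xs - xn)) + mu\<bullet>(b - Pn))
 = (c-1)*(fk - fs + ls\<bullet>(P - b) + \<beta>/2*(norm (P - b))\<^sup>2) - c*(fn - fs + ls\<bullet>(Pn - b) + \<beta>/2*(norm (Pn - b))\<^sup>2)
   + g*((xn - xb)\<bullet>(xs - (xk + c *\<^sub>R (xn - xk)))) - (mu - ls)\<bullet>((P + c *\<^sub>R (Pn - P)) - b)
   - \<beta>/2*(c-1)*(norm (P - Pn))\<^sup>2 - \<beta>/2*(norm (Pn - b))\<^sup>2"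
  unfolding power2_norm_eq_inner by (simp add: inner_simps inner_commute field_simps)

definition Vq :: "real \<Rightarrow> (nat \<Rightarrow> real) \<Rightarrow> (nat \<Rightarrow> 'a::real_inner) \<Rightarrow> 'a \<Rightarrow> nat \<Rightarrow> real" where
  "Vq \<eta> t z zs k = (norm (z (k-1) + t k *\<^sub>R (z k - z (k-1)) - zs))\<^sup>2
     - (1 - \<eta>) * ((t k - 1) * ((norm (z k - zs))\<^sup>2 - (norm (z (k-1) - zs))\<^sup>2) + (norm (z k - zs))\<^sup>2)"

lemma Vq_step:
  fixes z :: "nat \<Rightarrow> 'a::real_inner"
  assumes "\<eta> \<noteq> 0"
  shows "2 * \<eta> * inner ((z k + t (k+1) *\<^sub>R (z (k+1) - z k)) - (z (k-1) + t k *\<^sub>R (z k - z (k-1))))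
             (zs - (z k + (t (k+1) / \<eta>) *\<^sub>R (z (k+1) - z k)))
   = Vq \<eta> t z zs k - Vq \<eta> t z zs (k+1)
     - (norm ((z k + t (k+1) *\<^sub>R (z (k+1) - z k)) - (z (k-1) + t k *\<^sub>R (z k - z (k-1)))))\<^sup>2
     - (1 - \<eta>) * (t (k+1) * (norm (z (k+1) - z k))\<^sup>2 + (t k - 1) * (norm (z k - z (k-1)))\<^sup>2)"
  unfolding Vq_def using V_identity[OF assms, of "z k" "t (k+1)" "z (k+1)" "z (k-1)" "t k" zs] by simp

lemma extrap_diff:
  fixes z :: "nat \<Rightarrow> 'a::real_vector"
  assumes "t (k+1) \<noteq> 0"
  shows "(z k + t (k+1) *\<^sub>R (z (k+1) - z k)) - (z (k-1) + t k *\<^sub>R (z k - z (k-1)))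
       = t (k+1) *\<^sub>R (z (k+1) - extrap t z k)"
proof -
  have "t (k+1) *\<^sub>R (((t k - 1) / t (k+1)) *\<^sub>R (z k - z (k-1))) = (t k - 1) *\<^sub>R (z k - z (k-1))"
    using assms by simp
  thus ?thesis unfolding extrap_def by (simp add: algebra_simps)
qed

lemma lin_div:
  fixes X Q1 Q2 N P1 a b \<eta> D :: real
  assumes "D \<noteq> 0" "2 * \<eta> * X = Q1 - Q2 - N - (1 - \<eta>) * (P1 + a * b)" "\<eta> \<noteq> 0" "G = 2 * \<eta> * D"
  shows "X / D = Q1 / G - Q2 / G - N / G - ((1 - \<eta>) * P1) / G - (1 - \<eta>) / G * a * b"
proof -
  have "G \<noteq> 0" using assms(1,3,4) by simp
  have "X / D = (2 * \<eta> * X) / G" using assms(1,3) unfolding assms(4) by simp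
  also have "\<dots> = (Q1 - Q2 - N - (1 - \<eta>) * (P1 + a * b)) / G" unfolding assms(2) ..
  also have "\<dots> = Q1 / G - Q2 / G - N / G - ((1 - \<eta>) * P1) / G - (1 - \<eta>) / G * a * b"
    using \<open>G \<noteq> 0\<close> by (simp add: field_simps)
  finally show ?thesis .
qed

locale aalm =
  fixes f :: "real^'n \<Rightarrow> real" and gradf :: "real^'n \<Rightarrow> real^'n"
    and A :: "real^'n^'m" and b :: "real^'m"
    and t :: "nat \<Rightarrow> real" and \<rho> \<eta> \<gamma> \<delta> \<beta> :: real
    and x :: "nat \<Rightarrow> real^'n" and lam :: "nat \<Rightarrow> real^'m"
    and xs :: "real^'n" and ls :: "real^'m"
  assumes f_convex: "convex_on UNIV f"
    and f_grad: "\<And>z. (f has_derivative (\<lambda>h. gradf z \<bullet> h)) (at z)"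
    and t_mono: "\<And>k. k \<ge> 1 \<Longrightarrow> t k \<le> t (k + 1)"
    and t1: "t 1 = 1"
    and t_rate: "\<And>k. k \<ge> 1 \<Longrightarrow> (t (k + 1))\<^sup>2 - (t k)\<^sup>2 \<le> \<rho> * t (k + 1)"
    and rho: "0 < \<rho>" "\<rho> < 1"
    and eta: "\<rho> < \<eta>" "\<eta> < 1"
    and gamma: "\<gamma> > 0" and delta: "\<delta> > 0" and beta: "\<beta> \<ge> 0"
    and init: "x 0 = x 1" "lam 0 = lam 1"
    and x_update:
      "(\<forall>k\<ge>1. \<forall>y. subproblem_obj f A b \<beta> \<gamma> \<delta> \<eta> t x lam k (x (k + 1))
                    \<le> subproblem_obj f A b \<beta> \<gamma> \<delta> \<eta> t x lam k y)
       \<or> (\<exists>L>0. (\<forall>u v. norm (gradf u - gradf v) \<le> L * norm (u - v)) \<and> \<gamma> \<le> 1 / L \<and>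
           (\<forall>k\<ge>1. \<forall>y.
              subproblem_obj (\<lambda>z. gradf (extrap t x k) \<bullet> z) A b \<beta> \<gamma> \<delta> \<eta> t x lam k (x (k + 1))
              \<le> subproblem_obj (\<lambda>z. gradf (extrap t x k) \<bullet> z) A b \<beta> \<gamma> \<delta> \<eta> t x lam k y))"
    and lam_update: "\<And>k. k \<ge> 1 \<Longrightarrow>
       lam (k + 1) = extrap t lam k
         + \<delta> *\<^sub>R (c_k \<eta> t k *\<^sub>R (A *v x (k + 1)) - r_k \<eta> t A b x k)"
    and limit_kkt: "(xs, ls) \<in> kkt_set gradf A b"
begin

definition "mu k = lam k + c_k \<eta> t k *\<^sub>R (lam (k + 1) - lam k)"
definition "W k = x k + c_k \<eta> t k *\<^sub>R (x (k + 1) - x k)"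
definition "F j = f (x j) - f xs + ls \<bullet> (A *v x j - b) + \<beta> / 2 * (norm (A *v x j - b))\<^sup>2"

lemma eta_pos: "\<eta> > 0" using rho eta by linarith

lemma t_ge1: "k \<ge> 1 \<Longrightarrow> t k \<ge> 1"
proof (induction k rule: nat_induct_at_least)
  case base thus ?case using t1 by simp
next
  case (Suc n) thus ?case using t_mono[of n] by simp
qed

lemma Axs: "A *v xs = b" and grad_xs: "gradf xs + transpose A *v ls = 0"
  using limit_kkt by (auto simp: kkt_set_def)

lemma mu_eq:
  assumes k: "k \<ge> 1"
  shows "p_k \<eta> t lam k \<bullet> v + \<delta> * c_k \<eta> t k * ((c_k \<eta> t k *\<^sub>R (A *v x (k+1)) - r_k \<eta> t A b x k) \<bullet> v) = mu k \<bullet> v"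
proof -
  have al: "alpha_k \<eta> t k = c_k \<eta> t k - 1" using eta_pos by (simp add: alpha_k_def c_k_def field_simps)
  show ?thesis
    unfolding mu_def lam_update[OF k] p_k_def al by (simp add: inner_simps algebra_simps)
qed

lemma AW_eq:
  "c_k \<eta> t k *\<^sub>R (A *v x (k+1)) - r_k \<eta> t A b x k = A *v W k - b"
proof -
  have al: "alpha_k \<eta> t k = c_k \<eta> t k - 1" using eta_pos by (simp add: alpha_k_def c_k_def field_simps)
  show ?thesis unfolding W_def r_k_def al by (simp add: algebra_simps)
qed

lemma step_vi:
  assumes k: "k \<ge> 1"
  shows "f y - f (x (k+1)) + \<beta> * ((A *v x (k+1) - b) \<bullet> (A *v (y - x (k+1))))
     + 1 / \<gamma> * ((x (k+1) - extrap t x k) \<bullet> (y - x (k+1))) + mu k \<bullet> (A *v (y - x (k+1)))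
     \<ge> - (1 / (2 * \<gamma>)) * (norm (x (k+1) - extrap t x k))\<^sup>2"
  using x_update
proof
  assume H: "\<forall>k\<ge>1. \<forall>y. subproblem_obj f A b \<beta> \<gamma> \<delta> \<eta> t x lam k (x (k + 1))
                    \<le> subproblem_obj f A b \<beta> \<gamma> \<delta> \<eta> t x lam k y"
  have "0 \<le> f y - f (x (k+1)) + \<beta> * ((A *v x (k+1) - b) \<bullet> (A *v (y - x (k+1))))
     + 1 / \<gamma> * ((x (k+1) - extrap t x k) \<bullet> (y - x (k+1))) + p_k \<eta> t lam k \<bullet> (A *v (y - x (k+1)))
     + \<delta> * c_k \<eta> t k * ((c_k \<eta> t k *\<^sub>R (A *v x (k+1)) - r_k \<eta> t A b x k) \<bullet> (A *v (y - x (k+1))))"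
    by (rule quad_min_vi[OF f_convex gamma beta delta]) (use H k in \<open>simp add: subproblem_obj_def\<close>)
  moreover have "0 \<le> (1 / (2 * \<gamma>)) * (norm (x (k+1) - extrap t x k))\<^sup>2" using gamma by simp
  ultimately show ?thesis using mu_eq[OF k, of "A *v (y - x (k+1))"] by linarith
next
  assume "\<exists>L>0. (\<forall>u v. norm (gradf u - gradf v) \<le> L * norm (u - v)) \<and> \<gamma> \<le> 1 / L \<and>
           (\<forall>k\<ge>1. \<forall>y.
              subproblem_obj (\<lambda>z. gradf (extrap t x k) \<bullet> z) A b \<beta> \<gamma> \<delta> \<eta> t x lam k (x (k + 1))
              \<le> subproblem_obj (\<lambda>z. gradf (extrap t x k) \<bullet> z) A b \<beta> \<gamma> \<delta> \<eta> t x lam k y)"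
  then obtain L where L: "L > 0" "\<And>u v. norm (gradf u - gradf v) \<le> L * norm (u - v)" "\<gamma> \<le> 1 / L"
    and H: "\<forall>k\<ge>1. \<forall>y.
              subproblem_obj (\<lambda>z. gradf (extrap t x k) \<bullet> z) A b \<beta> \<gamma> \<delta> \<eta> t x lam k (x (k + 1))
              \<le> subproblem_obj (\<lambda>z. gradf (extrap t x k) \<bullet> z) A b \<beta> \<gamma> \<delta> \<eta> t x lam k y" by blast
  define G where "G = gradf (extrap t x k)"
  define xb where "xb = extrap t x k"
  define xp where "xp = x (k+1)"
  have lin: "convex_on UNIV (\<lambda>z. G \<bullet> z)"
    by (rule convex_onI) (auto simp: inner_simps)
  have "0 \<le> G \<bullet> y - G \<bullet> xp + \<beta> * ((A *v xp - b) \<bullet> (A *v (y - xp)))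
     + 1 / \<gamma> * ((xp - xb) \<bullet> (y - xp)) + p_k \<eta> t lam k \<bullet> (A *v (y - xp))
     + \<delta> * c_k \<eta> t k * ((c_k \<eta> t k *\<^sub>R (A *v xp) - r_k \<eta> t A b x k) \<bullet> (A *v (y - xp)))"
    by (rule quad_min_vi[OF lin gamma beta delta]) (use H k in \<open>simp add: subproblem_obj_def G_def xb_def xp_def\<close>)
  moreover have "f y - f xb \<ge> G \<bullet> (y - xb)" unfolding G_def xb_def by (rule convex_grad_ineq[OF f_convex f_grad])
  moreover have "f xp \<le> f xb + G \<bullet> (xp - xb) + L / 2 * (norm (xp - xb))\<^sup>2"
    unfolding G_def xb_def by (rule descent_lemma[OF f_grad L(2)])
  moreover have "L / 2 * (norm (xp - xb))\<^sup>2 \<le> (1 / (2 * \<gamma>)) * (norm (xp - xb))\<^sup>2"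
  proof -
    have "L \<le> 1 / \<gamma>" using L gamma by (simp add: field_simps)
    thus ?thesis by (intro mult_right_mono) (auto simp: field_simps)
  qed
  moreover have "G \<bullet> y - G \<bullet> xp = G \<bullet> (y - xb) - G \<bullet> (xp - xb)" by (simp add: inner_simps)
  ultimately show ?thesis using mu_eq[OF k, of "A *v (y - xp)"] unfolding xp_def xb_def by linarith
qed

definition "E k = (t k)\<^sup>2 / \<eta> * F k + Vq \<eta> t x xs k / (2 * \<eta> * \<gamma>) + Vq \<eta> t lam ls k / (2 * \<eta> * \<delta>)"

lemma F_nonneg: "F j \<ge> 0"
proof -
  have "f (x j) - f xs \<ge> gradf xs \<bullet> (x j - xs)" by (rule convex_grad_ineq[OF f_convex f_grad])
  also have "gradf xs = - (transpose A *v ls)" using grad_xs by (simp add: eq_neg_iff_add_eq_0)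
  also have "- (transpose A *v ls) \<bullet> (x j - xs) = - (ls \<bullet> (A *v x j - b))"
    by (simp add: dot_lmul_matrix Axs algebra_simps)
  finally show ?thesis unfolding F_def using beta by simp
qed

lemma energy_step:
  assumes k: "k \<ge> 1"
  shows "E (k+1) \<le> E k - (\<eta> - \<rho>) / \<eta> * t k * F k
     - (1 - \<eta>) / (2 * \<eta> * \<gamma>) * (t k - 1) * (norm (x k - x (k-1)))\<^sup>2
     - (1 - \<eta>) / (2 * \<eta> * \<delta>) * (t k - 1) * (norm (lam k - lam (k-1)))\<^sup>2"
proof -
  define \<tau> where "\<tau> = t (k+1)"
  define c where "c = c_k \<eta> t k"
  have c: "c = \<tau> / \<eta>" by (simp add: c_def \<tau>_def c_k_def)
  have tk1: "t k \<ge> 1" using t_ge1[OF k] .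
  have tau_ge: "\<tau> \<ge> t k" using t_mono[OF k] by (simp add: \<tau>_def)
  have tau1: "\<tau> \<ge> 1" using tk1 tau_ge by linarith
  have ep: "\<eta> > 0" by (rule eta_pos)
  have c1: "c - 1 \<ge> 0" using tau1 eta ep by (simp add: c field_simps)
  define xb where "xb = extrap t x k"
  define lb where "lb = extrap t lam k"
  define P where "P = A *v x k"
  define Pn where "Pn = A *v x (k+1)"
  define \<epsilon> where "\<epsilon> = (1 / (2 * \<gamma>)) * (norm (x (k+1) - xb))\<^sup>2"
  have I1: "f (x k) - f (x (k+1)) + \<beta> * ((Pn - b) \<bullet> (P - Pn))
     + (1 / \<gamma>) * ((x (k+1) - xb) \<bullet> (x k - x (k+1))) + mu k \<bullet> (P - Pn) \<ge> - \<epsilon>"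
    using step_vi[OF k, of "x k"] by (simp add: P_def Pn_def xb_def \<epsilon>_def matrix_vector_mult_diff_distrib)
  have I2: "f xs - f (x (k+1)) + \<beta> * ((Pn - b) \<bullet> (b - Pn))
     + (1 / \<gamma>) * ((x (k+1) - xb) \<bullet> (xs - x (k+1))) + mu k \<bullet> (b - Pn) \<ge> - \<epsilon>"
    using step_vi[OF k, of xs] by (simp add: P_def Pn_def xb_def \<epsilon>_def matrix_vector_mult_diff_distrib Axs)
  have AW: "A *v W k = P + c *\<^sub>R (Pn - P)"
    by (simp add: W_def P_def Pn_def c_def algebra_simps)
  define XT where "XT = (1 / \<gamma>) * ((x (k+1) - xb) \<bullet> (xs - W k))"
  define LT where "LT = (mu k - ls) \<bullet> (A *v W k - b)"
  have "(c-1) * (- \<epsilon>) + (- \<epsilon>) \<le> (c-1)*(f (x k) - f (x (k+1)) + \<beta> * ((Pn - b) \<bullet> (P - Pn))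
     + (1 / \<gamma>) * ((x (k+1) - xb) \<bullet> (x k - x (k+1))) + mu k \<bullet> (P - Pn))
     + (f xs - f (x (k+1)) + \<beta> * ((Pn - b) \<bullet> (b - Pn))
     + (1 / \<gamma>) * ((x (k+1) - xb) \<bullet> (xs - x (k+1))) + mu k \<bullet> (b - Pn))"
    using mult_left_mono[OF I1 c1] I2 by linarith
  also have "\<dots> = (c-1) * F k - c * F (k+1) + XT - LT
       - \<beta>/2*(c-1)*(norm (P - Pn))\<^sup>2 - \<beta>/2*(norm (Pn - b))\<^sup>2"
    unfolding F_def XT_def LT_def AW unfolding W_def c_def[symmetric] P_def[symmetric] Pn_def[symmetric] by (rule comb_identity)
  finally have ineqA0: "(c-1) * (- \<epsilon>) + (- \<epsilon>) \<le> (c-1) * F k - c * F (k+1) + XT - LT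
       - \<beta>/2*(c-1)*(norm (P - Pn))\<^sup>2 - \<beta>/2*(norm (Pn - b))\<^sup>2" .
  have nn1: "\<beta>/2*(c-1)*(norm (P - Pn))\<^sup>2 \<ge> 0" using beta c1 by simp
  have nn2: "\<beta>/2*(norm (Pn - b))\<^sup>2 \<ge> 0" using beta by simp
  have ce: "(c-1) * (- \<epsilon>) + (- \<epsilon>) = - (c * \<epsilon>)" by (simp add: algebra_simps)
  have ineqA: "c * F (k+1) \<le> (c-1) * F k + XT - LT + c * \<epsilon>"
    using ineqA0 nn1 nn2 ce by linarith
  have tau0: "\<tau> > 0" using tau1 by simp
  have ineqB: "\<tau> * c * F (k+1) \<le> \<tau> * (c-1) * F k + \<tau> * XT - \<tau> * LT + \<tau> * c * \<epsilon>"
    using mult_left_mono[OF ineqA, of \<tau>] tau0 by (simp add: algebra_simps)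
  define dv where "dv = (x k + t (k+1) *\<^sub>R (x (k+1) - x k)) - (x (k-1) + t k *\<^sub>R (x k - x (k-1)))"
  define dl where "dl = (lam k + t (k+1) *\<^sub>R (lam (k+1) - lam k)) - (lam (k-1) + t k *\<^sub>R (lam k - lam (k-1)))"
  have dv: "dv = \<tau> *\<^sub>R (x (k+1) - xb)" unfolding dv_def xb_def \<tau>_def
    by (rule extrap_diff) (use tau0 \<tau>_def in auto)
  have dl: "dl = \<tau> *\<^sub>R (lam (k+1) - lb)" unfolding dl_def lb_def \<tau>_def
    by (rule extrap_diff) (use tau0 \<tau>_def in auto)
  have lupd: "lam (k+1) - lb = \<delta> *\<^sub>R (A *v W k - b)"
    using lam_update[OF k] AW_eq[of k] by (simp add: lb_def)
  have Wx: "W k = x k + (t (k+1) / \<eta>) *\<^sub>R (x (k+1) - x k)" by (simp add: W_def c_k_def)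
  have Wl: "mu k = lam k + (t (k+1) / \<eta>) *\<^sub>R (lam (k+1) - lam k)" by (simp add: mu_def c_k_def)
  have VX: "2 * \<eta> * (dv \<bullet> (xs - W k)) = Vq \<eta> t x xs k - Vq \<eta> t x xs (k+1) - (norm dv)\<^sup>2
     - (1 - \<eta>) * (t (k+1) * (norm (x (k+1) - x k))\<^sup>2 + (t k - 1) * (norm (x k - x (k-1)))\<^sup>2)"
    unfolding dv_def Wx by (rule Vq_step) (use ep in simp)
  have VL: "2 * \<eta> * (dl \<bullet> (ls - mu k)) = Vq \<eta> t lam ls k - Vq \<eta> t lam ls (k+1) - (norm dl)\<^sup>2
     - (1 - \<eta>) * (t (k+1) * (norm (lam (k+1) - lam k))\<^sup>2 + (t k - 1) * (norm (lam k - lam (k-1)))\<^sup>2)"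
    unfolding dl_def Wl by (rule Vq_step) (use ep in simp)
  have XT: "\<tau> * XT = (dv \<bullet> (xs - W k)) / \<gamma>"
    unfolding XT_def dv inner_scaleR_left by simp
  have LT: "\<tau> * LT = - (dl \<bullet> (ls - mu k)) / \<delta>"
  proof -
    have dl2: "dl = (\<tau> * \<delta>) *\<^sub>R (A *v W k - b)" using dl lupd by simp
    have sw: "(A *v W k - b) \<bullet> (ls - mu k) = - ((mu k - ls) \<bullet> (A *v W k - b))"
      by (simp add: inner_diff_left inner_diff_right inner_commute)
    have "dl \<bullet> (ls - mu k) = (\<tau> * \<delta>) * ((A *v W k - b) \<bullet> (ls - mu k))"
      unfolding dl2 inner_scaleR_left by simp
    hence "dl \<bullet> (ls - mu k) = - (\<tau> * \<delta>) * LT" unfolding LT_def sw by simp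
    thus ?thesis using delta by (simp add: field_simps)
  qed
  have EPS: "\<tau> * c * \<epsilon> = (norm dv)\<^sup>2 / (2 * \<eta> * \<gamma>)"
  proof -
    have "norm dv = \<tau> * norm (x (k+1) - xb)" using dv tau0 by simp
    thus ?thesis unfolding \<epsilon>_def c using ep gamma by (simp add: power2_eq_square field_simps)
  qed
  have tc: "\<tau> * c = \<tau>\<^sup>2 / \<eta>" by (simp add: c power2_eq_square)
  have tc1: "\<tau> * (c - 1) * F k \<le> (t k)\<^sup>2 / \<eta> * F k - (\<eta> - \<rho>) / \<eta> * t k * F k"
  proof -
    have r: "\<tau>\<^sup>2 - (t k)\<^sup>2 \<le> \<rho> * \<tau>" using t_rate[OF k] by (simp add: \<tau>_def)
    have "\<tau> * (c - 1) = (t k)\<^sup>2 / \<eta> + (\<tau>\<^sup>2 - (t k)\<^sup>2 - \<eta> * \<tau>) / \<eta>" using ep by (simp add: c field_simps power2_eq_square)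
    also have "\<dots> \<le> (t k)\<^sup>2 / \<eta> - (\<eta> - \<rho>) / \<eta> * t k"
    proof -
      have h: "\<tau>\<^sup>2 - (t k)\<^sup>2 - \<eta> * \<tau> \<le> - (\<eta> - \<rho>) * t k"
        using r tau_ge eta mult_right_mono[OF tau_ge, of "\<eta> - \<rho>"] by (simp add: algebra_simps)
      have "(\<tau>\<^sup>2 - (t k)\<^sup>2 - \<eta> * \<tau>) / \<eta> \<le> (- (\<eta> - \<rho>) * t k) / \<eta>"
        using divide_right_mono[OF h, of \<eta>] ep by simp
      also have "\<dots> = - ((\<eta> - \<rho>) / \<eta> * t k)" using ep by (simp add: field_simps)
      finally show ?thesis by linarith
    qed
    finally have "\<tau> * (c - 1) \<le> (t k)\<^sup>2 / \<eta> - (\<eta> - \<rho>) / \<eta> * t k" .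
    hence "\<tau> * (c - 1) * F k \<le> ((t k)\<^sup>2 / \<eta> - (\<eta> - \<rho>) / \<eta> * t k) * F k"
      using F_nonneg[of k] by (rule mult_right_mono)
    thus ?thesis by (simp add: algebra_simps)
  qed
  have n1: "(1 - \<eta>) * (t (k+1) * (norm (x (k+1) - x k))\<^sup>2) \<ge> 0"
    using eta tau0 \<tau>_def by simp
  have n2: "(1 - \<eta>) * (t (k+1) * (norm (lam (k+1) - lam k))\<^sup>2) \<ge> 0"
    using eta tau0 \<tau>_def by simp
  have "E (k+1) = \<tau> * c * F (k+1) + Vq \<eta> t x xs (k+1) / (2 * \<eta> * \<gamma>) + Vq \<eta> t lam ls (k+1) / (2 * \<eta> * \<delta>)"
  proof -
    have "\<tau> * c * F (k+1) = (t (k+1))\<^sup>2/\<eta> * F (k+1)" using tc by (simp add: \<tau>_def)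
    thus ?thesis unfolding E_def by simp
  qed
  also have "\<dots> \<le> (t k)\<^sup>2 / \<eta> * F k - (\<eta> - \<rho>) / \<eta> * t k * F k
      + (dv \<bullet> (xs - W k)) / \<gamma> + (dl \<bullet> (ls - mu k)) / \<delta>
      + (norm dv)\<^sup>2 / (2 * \<eta> * \<gamma>)
      + Vq \<eta> t x xs (k+1) / (2 * \<eta> * \<gamma>) + Vq \<eta> t lam ls (k+1) / (2 * \<eta> * \<delta>)"
    using ineqB tc1 XT LT EPS by linarith
  also have "\<dots> \<le> E k - (\<eta> - \<rho>) / \<eta> * t k * F k
     - (1 - \<eta>) / (2 * \<eta> * \<gamma>) * (t k - 1) * (norm (x k - x (k-1)))\<^sup>2
     - (1 - \<eta>) / (2 * \<eta> * \<delta>) * (t k - 1) * (norm (lam k - lam (k-1)))\<^sup>2"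
  proof -
    have X2: "(dv \<bullet> (xs - W k)) / \<gamma> = Vq \<eta> t x xs k / (2 * \<eta> * \<gamma>) - Vq \<eta> t x xs (k+1) / (2 * \<eta> * \<gamma>)
       - (norm dv)\<^sup>2 / (2 * \<eta> * \<gamma>) - ((1 - \<eta>) * (t (k+1) * (norm (x (k+1) - x k))\<^sup>2)) / (2 * \<eta> * \<gamma>)
       - (1 - \<eta>) / (2 * \<eta> * \<gamma>) * (t k - 1) * (norm (x k - x (k-1)))\<^sup>2"
      by (rule lin_div[OF _ VX]) (use ep gamma in auto)
    have L2: "(dl \<bullet> (ls - mu k)) / \<delta> = Vq \<eta> t lam ls k / (2 * \<eta> * \<delta>) - Vq \<eta> t lam ls (k+1) / (2 * \<eta> * \<delta>)
       - (norm dl)\<^sup>2 / (2 * \<eta> * \<delta>) - ((1 - \<eta>) * (t (k+1) * (norm (lam (k+1) - lam k))\<^sup>2)) / (2 * \<eta> * \<delta>)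
       - (1 - \<eta>) / (2 * \<eta> * \<delta>) * (t k - 1) * (norm (lam k - lam (k-1)))\<^sup>2"
      by (rule lin_div[OF _ VL]) (use ep delta in auto)
    have m1: "((1 - \<eta>) * (t (k+1) * (norm (x (k+1) - x k))\<^sup>2)) / (2 * \<eta> * \<gamma>) \<ge> 0"
      using n1 ep gamma by simp
    have m2: "((1 - \<eta>) * (t (k+1) * (norm (lam (k+1) - lam k))\<^sup>2)) / (2 * \<eta> * \<delta>) \<ge> 0"
      using n2 ep delta by simp
    have m3: "(norm dl)\<^sup>2 / (2 * \<eta> * \<delta>) \<ge> 0" using ep delta by simp
    show ?thesis using X2 L2 m1 m2 m3 unfolding E_def by linarith
  qed
  finally show ?thesis .
qed

end

lemma tele_sum:
  fixes w h :: "nat \<Rightarrow> real"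
  assumes "\<And>k. k \<ge> N \<Longrightarrow> w k \<le> h k - h (Suc k)" and "K \<ge> N"
  shows "(\<Sum>k\<in>{N..K}. w k) \<le> h N - h (Suc K)"
  using assms(2)
proof (induction K rule: nat_induct_at_least)
  case base thus ?case using assms(1)[of N] by simp
next
  case (Suc n)
  have "(\<Sum>k\<in>{N..Suc n}. w k) = (\<Sum>k\<in>{N..n}. w k) + w (Suc n)"
    using Suc.hyps by (simp add: sum.cl_ivl_Suc)
  also have "\<dots> \<le> h N - h (Suc n) + (h (Suc n) - h (Suc (Suc n)))"
    using Suc.IH assms(1)[of "Suc n"] Suc.hyps by simp
  finally show ?case by simp
qed

lemma tele_bound:
  fixes w h :: "nat \<Rightarrow> real"
  assumes "\<And>k. k \<ge> N \<Longrightarrow> w k \<le> h k - h (Suc k)" and "\<And>k. k \<ge> N \<Longrightarrow> h k \<ge> L"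
  shows "(\<Sum>k\<in>{N..K}. w k) \<le> \<bar>h N - L\<bar>"
proof (cases "K \<ge> N")
  case True
  have "(\<Sum>k\<in>{N..K}. w k) \<le> h N - h (Suc K)" using tele_sum[of N w h K] assms(1) True by blast
  also have "\<dots> \<le> h N - L" using assms(2)[of "Suc K"] True by simp
  finally show ?thesis by simp
next
  case False thus ?thesis by simp
qed

lemma noninc_from:
  fixes h :: "nat \<Rightarrow> real"
  assumes "\<And>k. k \<ge> N \<Longrightarrow> h (Suc k) \<le> h k" and "k \<ge> N"
  shows "h k \<le> h N"
  using assms(2)
proof (induction k rule: nat_induct_at_least)
  case base thus ?case by simp
next
  case (Suc n) thus ?case using assms(1)[of n] by simp
qed

lemma avg_lemma:
  fixes a b q :: "nat \<Rightarrow> real"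
  assumes rec: "\<And>k. k \<ge> N0 \<Longrightarrow> a (Suc k) \<le> (1 - q k) * a k + q k * b k"
    and q0: "\<And>k. k \<ge> N0 \<Longrightarrow> 0 \<le> q k" and q1: "\<And>k. k \<ge> N0 \<Longrightarrow> q k \<le> 1"
    and qk: "\<And>k. k \<ge> N0 \<Longrightarrow> \<kappa> / real k \<le> q k" and kap: "\<kappa> > 0"
    and blim: "b \<longlonglongrightarrow> 0" and a0: "\<And>k. a k \<ge> 0" and N0: "N0 \<ge> 1"
  shows "a \<longlonglongrightarrow> 0"
proof (rule LIMSEQ_I)
  fix r :: real assume r: "r > 0"
  define \<epsilon> where "\<epsilon> = r / 3"
  have e: "\<epsilon> > 0" using r by (simp add: \<epsilon>_def)
  obtain N1 where N1: "\<And>k. k \<ge> N1 \<Longrightarrow> norm (b k) < \<epsilon>"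
    using LIMSEQ_D[OF blim e] by auto
  define N2 where "N2 = max N0 N1"
  have N2: "N2 \<ge> N0" "N2 \<ge> N1" "N2 \<ge> 1" using N0 by (auto simp: N2_def)
  define c where "c = (\<lambda>k. max (a k - \<epsilon>) 0)"
  have crec: "c (Suc k) \<le> c k - q k * c k" if k: "k \<ge> N2" for k
  proof -
    have bk: "b k \<le> \<epsilon>" using N1[of k] k N2 by auto
    have "a (Suc k) \<le> (1 - q k) * a k + q k * \<epsilon>"
      using rec[of k] mult_left_mono[OF bk q0[of k]] k N2 by simp
    hence ak: "a (Suc k) - \<epsilon> \<le> (1 - q k) * (a k - \<epsilon>)" by (simp add: algebra_simps)
    have q01: "0 \<le> q k" "q k \<le> 1" using q0 q1 k N2 by auto
    show ?thesis
    proof (cases "a k - \<epsilon> \<ge> 0")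
      case True
      hence "c k = a k - \<epsilon>" by (simp add: c_def)
      moreover have "(1 - q k) * (a k - \<epsilon>) \<ge> 0" using True q01 by simp
      ultimately show ?thesis using ak by (simp add: c_def algebra_simps)
    next
      case False
      hence "(1 - q k) * (a k - \<epsilon>) \<le> 0" using q01 by (simp add: mult_nonneg_nonpos)
      thus ?thesis using ak False by (simp add: c_def)
    qed
  qed
  have c0: "c k \<ge> 0" for k by (simp add: c_def)
  have "\<exists>N\<ge>N2. c N < \<epsilon>"
  proof (rule ccontr)
    assume "\<not> (\<exists>N\<ge>N2. c N < \<epsilon>)"
    hence ce: "\<And>k. k \<ge> N2 \<Longrightarrow> c k \<ge> \<epsilon>" by force
    show False
    proof (rule div_contra[of N2 "\<lambda>k. q k * c k" "\<kappa> * \<epsilon>"])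
      show "0 \<le> q k * c k" if "k \<ge> N2" for k using q0[of k] c0[of k] that N2 by simp
      show "\<kappa> * \<epsilon> / real k \<le> q k * c k" if k: "k \<ge> N2" for k
      proof -
        have "\<kappa> * \<epsilon> / real k = (\<kappa> / real k) * \<epsilon>" by simp
        also have "\<dots> \<le> q k * c k"
          using qk[of k] ce[OF k] k N2 kap e q0[of k] by (intro mult_mono) auto
        finally show ?thesis .
      qed
      show "N2 \<ge> 1" by (rule N2(3))
      show "\<kappa> * \<epsilon> > 0" using kap e by simp
      show "(\<Sum>k\<in>{N2..K}. q k * c k) \<le> \<bar>c N2 - 0\<bar>" for K
        by (rule tele_bound) (use crec c0 in \<open>auto simp: algebra_simps\<close>)
    qed
  qed
  then obtain N where N: "N \<ge> N2" "c N < \<epsilon>" by auto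
  show "\<exists>no. \<forall>n\<ge>no. norm (a n - 0) < r"
  proof (intro exI allI impI)
    fix n assume n: "n \<ge> N"
    have "c n \<le> c N"
    proof (rule noninc_from[OF _ n])
      fix k assume "k \<ge> N"
      thus "c (Suc k) \<le> c k" using crec[of k] q0[of k] c0[of k] N N2 by (smt (verit) mult_nonneg_nonneg le_trans)
    qed
    moreover have "a n - \<epsilon> \<le> c n" by (simp add: c_def)
    ultimately have "a n < 2 * \<epsilon>" using N(2) by linarith
    thus "norm (a n - 0) < r" using a0[of n] by (simp add: \<epsilon>_def)
  qed
qed

lemma Vq_bounds:
  fixes z :: "nat \<Rightarrow> 'a::real_inner"
  assumes tk: "t k \<ge> 1" and e0: "0 \<le> 1 - \<eta>" and e1: "1 - \<eta> \<le> 1"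
  shows "((t k - 1) * norm (z k - z (k-1)))\<^sup>2 / 2 - 12 * ((norm (z k - zs))\<^sup>2 + (norm (z (k-1) - zs))\<^sup>2) \<le> Vq \<eta> t z zs k"
    and "Vq \<eta> t z zs k \<le> 3/2 * ((t k - 1) * norm (z k - z (k-1)))\<^sup>2 + 12 * ((norm (z k - zs))\<^sup>2 + (norm (z (k-1) - zs))\<^sup>2)"
proof -
  define y1 where "y1 = z k - zs"
  define y0 where "y0 = z (k-1) - zs"
  define d where "d = z k - z (k-1)"
  define s where "s = t k - 1"
  define a where "a = norm y1"
  define a0 where "a0 = norm y0"
  define n where "n = norm d"
  define p where "p = inner y1 d"
  define D where "D = s * n"
  have s0: "s \<ge> 0" using tk by (simp add: s_def)
  have a_0: "a \<ge> 0" "a0 \<ge> 0" "n \<ge> 0" by (simp_all add: a_def a0_def n_def)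
  have eq1: "z (k-1) + t k *\<^sub>R (z k - z (k-1)) - zs = y1 + s *\<^sub>R d"
    by (simp add: y1_def d_def s_def algebra_simps)
  have Vq: "Vq \<eta> t z zs k = a\<^sup>2 + 2 * s * p + D\<^sup>2 - (1 - \<eta>) * (s * (a\<^sup>2 - a0\<^sup>2) + a\<^sup>2)"
    unfolding Vq_def eq1 norm_add_scale_sq
    by (simp add: a_def a0_def p_def D_def n_def y1_def y0_def s_def power_mult_distrib)
  have pb: "\<bar>p\<bar> \<le> a * n" unfolding p_def a_def n_def by (rule Cauchy_Schwarz_ineq2)
  have hp: "\<bar>2 * s * p\<bar> \<le> 2 * a * D"
  proof -
    have "\<bar>2 * s * p\<bar> = 2 * s * \<bar>p\<bar>" using s0 by (simp add: abs_mult)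
    also have "\<dots> \<le> 2 * s * (a * n)" using pb s0 by (intro mult_left_mono) auto
    finally show ?thesis by (simp add: D_def algebra_simps)
  qed
  have dn: "\<bar>a - a0\<bar> \<le> n"
  proof -
    have "y1 - y0 = d" by (simp add: y1_def y0_def d_def)
    thus ?thesis unfolding a_def a0_def n_def by (metis norm_triangle_ineq3)
  qed
  have hq: "\<bar>s * (a\<^sup>2 - a0\<^sup>2)\<bar> \<le> D * (a + a0)"
  proof -
    have "\<bar>s * (a\<^sup>2 - a0\<^sup>2)\<bar> = \<bar>s * ((a - a0) * (a + a0))\<bar>" by (simp add: power2_eq_square algebra_simps)
    also have "\<bar>s * ((a - a0) * (a + a0))\<bar> = s * (\<bar>a - a0\<bar> * (a + a0))"
      using s0 a_0 by (simp add: abs_mult)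
    finally have "\<bar>s * (a\<^sup>2 - a0\<^sup>2)\<bar> = s * (\<bar>a - a0\<bar> * (a + a0))" .
    also have "\<dots> \<le> s * (n * (a + a0))" using dn s0 a_0 by (intro mult_left_mono mult_right_mono) auto
    finally show ?thesis by (simp add: D_def algebra_simps)
  qed
  have h3: "\<bar>(1 - \<eta>) * (s * (a\<^sup>2 - a0\<^sup>2) + a\<^sup>2)\<bar> \<le> D * (a + a0) + a\<^sup>2"
  proof -
    have "\<bar>(1 - \<eta>) * (s * (a\<^sup>2 - a0\<^sup>2) + a\<^sup>2)\<bar> = (1 - \<eta>) * \<bar>s * (a\<^sup>2 - a0\<^sup>2) + a\<^sup>2\<bar>"
      using e0 by (simp add: abs_mult)
    also have "\<dots> \<le> 1 * \<bar>s * (a\<^sup>2 - a0\<^sup>2) + a\<^sup>2\<bar>" using e1 by (intro mult_right_mono) auto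
    also have "\<dots> \<le> D * (a + a0) + a\<^sup>2" using hq abs_triangle_ineq[of "s * (a\<^sup>2 - a0\<^sup>2)" "a\<^sup>2"] by simp
    finally show ?thesis .
  qed
  have h4: "3 * (D * (a + a0)) \<le> D\<^sup>2 / 2 + 9 * (a\<^sup>2 + a0\<^sup>2)"
  proof -
    have "0 \<le> (D - 3 * (a + a0))\<^sup>2" by simp
    moreover have "0 \<le> (a - a0)\<^sup>2" by simp
    ultimately show ?thesis by (simp add: power2_eq_square algebra_simps)
  qed
  have h5: "2 * a * D \<le> 2 * (D * (a + a0))" using a_0 s0 by (simp add: D_def algebra_simps)
  have a0sq: "a0\<^sup>2 \<ge> 0" by simp
  have gdef: "(norm (z k - zs))\<^sup>2 + (norm (z (k-1) - zs))\<^sup>2 = a\<^sup>2 + a0\<^sup>2" by (simp add: a_def a0_def y1_def y0_def)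
  have Ddef: "(t k - 1) * norm (z k - z (k-1)) = D" by (simp add: D_def s_def n_def d_def)
  define Y where "Y = 2 * s * p"
  define Z where "Z = (1 - \<eta>) * (s * (a\<^sup>2 - a0\<^sup>2) + a\<^sup>2)"
  define X where "X = D * (a + a0)"
  define g where "g = a\<^sup>2 + a0\<^sup>2"
  define DD where "DD = D\<^sup>2"
  define AA where "AA = a\<^sup>2"
  have f1: "Y \<le> 2 * X" "- Y \<le> 2 * X" using hp h5 abs_ge_self[of "2 * s * p"] abs_ge_minus_self[of "2 * s * p"] Y_def X_def by linarith+
  have f2: "Z \<le> X + AA" "- Z \<le> X + AA" using h3 abs_ge_self[of Z] abs_ge_minus_self[of Z] Z_def X_def AA_def by linarith+
  have f3: "3 * X \<le> DD / 2 + 9 * g" using h4 by (simp add: X_def DD_def g_def)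
  have f4: "AA \<le> g" "0 \<le> AA" by (simp_all add: AA_def g_def)
  have V2: "Vq \<eta> t z zs k = AA + Y + DD - Z" unfolding Vq by (simp add: AA_def Y_def DD_def Z_def)
  show "((t k - 1) * norm (z k - z (k-1)))\<^sup>2 / 2 - 12 * ((norm (z k - zs))\<^sup>2 + (norm (z (k-1) - zs))\<^sup>2) \<le> Vq \<eta> t z zs k"
    unfolding gdef Ddef V2 using f1 f2 f3 f4 by (simp add: DD_def g_def)
  show "Vq \<eta> t z zs k \<le> 3/2 * ((t k - 1) * norm (z k - z (k-1)))\<^sup>2 + 12 * ((norm (z k - zs))\<^sup>2 + (norm (z (k-1) - zs))\<^sup>2)"
    unfolding gdef Ddef V2 using f1 f2 f3 f4 by (simp add: DD_def g_def)
qed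


context aalm
begin

lemma t_pos: "k \<ge> 1 \<Longrightarrow> t k > 0" using t_ge1[of k] by simp

lemma t_le_k: "k \<ge> 1 \<Longrightarrow> t k \<le> real k"
proof (induction k rule: nat_induct_at_least)
  case base thus ?case using t1 by simp
next
  case (Suc n)
  have n: "n \<ge> 1" by fact
  have "t (n+1) \<le> t n + 1"
  proof (rule ccontr)
    assume "\<not> t (n+1) \<le> t n + 1"
    hence h: "t (n+1) - t n > 1" by simp
    have p: "t (n+1) + t n > 0" using t_pos[OF n] t_mono[OF n] by simp
    have "(t (n+1))\<^sup>2 - (t n)\<^sup>2 = (t (n+1) - t n) * (t (n+1) + t n)" by (simp add: power2_eq_square algebra_simps)
    also have "\<dots> > 1 * (t (n+1) + t n)" using h p by (intro mult_strict_right_mono) auto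
    finally have "(t (n+1))\<^sup>2 - (t n)\<^sup>2 > t (n+1) + t n" by simp
    moreover have "\<rho> * t (n+1) \<le> t (n+1)" using rho t_pos[of "n+1"] by simp
    ultimately show False using t_rate[OF n] t_pos[OF n] by simp
  qed
  thus ?case using Suc.IH by simp
qed

definition "M k = (t k)\<^sup>2 / \<eta> * F k + ((t k - 1) * norm (x k - x (k-1)))\<^sup>2 / (2 * \<eta> * \<gamma>)
   + ((t k - 1) * norm (lam k - lam (k-1)))\<^sup>2 / (2 * \<eta> * \<delta>)"
definition "G k = 12 * ((norm (x k - xs))\<^sup>2 + (norm (x (k-1) - xs))\<^sup>2) / (2 * \<eta> * \<gamma>)
   + 12 * ((norm (lam k - ls))\<^sup>2 + (norm (lam (k-1) - ls))\<^sup>2) / (2 * \<eta> * \<delta>)"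
definition "acoef k = (\<eta> - \<rho>) / \<eta> * t k * F k
     + (1 - \<eta>) / (2 * \<eta> * \<gamma>) * (t k - 1) * (norm (x k - x (k-1)))\<^sup>2
     + (1 - \<eta>) / (2 * \<eta> * \<delta>) * (t k - 1) * (norm (lam k - lam (k-1)))\<^sup>2"

lemma E_step: "k \<ge> 1 \<Longrightarrow> E (Suc k) \<le> E k - acoef k"
  using energy_step[of k] by (simp add: acoef_def)

lemma M_nonneg: "k \<ge> 1 \<Longrightarrow> M k \<ge> 0"
  using F_nonneg[of k] eta_pos gamma delta by (simp add: M_def)

lemma acoef_nonneg: "k \<ge> 1 \<Longrightarrow> acoef k \<ge> 0"
  using F_nonneg[of k] eta_pos gamma delta eta t_ge1[of k] by (simp add: acoef_def)

lemma G_nonneg: "G k \<ge> 0"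
  using eta_pos gamma delta by (simp add: G_def)

lemma E_bounds:
  assumes k: "k \<ge> 1"
  shows "M k / 2 - G k \<le> E k" and "E k \<le> 3/2 * M k + G k"
proof -
  have tk: "t k \<ge> 1" by (rule t_ge1[OF k])
  have e0: "0 \<le> 1 - \<eta>" "1 - \<eta> \<le> 1" using eta eta_pos by auto
  note bx = Vq_bounds[of t k \<eta> x xs, OF tk e0]
  note bl = Vq_bounds[of t k \<eta> lam ls, OF tk e0]
  define cx where "cx = 2 * \<eta> * \<gamma>"
  define cl where "cl = 2 * \<eta> * \<delta>"
  have cx: "cx > 0" and cl: "cl > 0" using eta_pos gamma delta by (simp_all add: cx_def cl_def)
  define Dx where "Dx = ((t k - 1) * norm (x k - x (k-1)))\<^sup>2"
  define Dl where "Dl = ((t k - 1) * norm (lam k - lam (k-1)))\<^sup>2"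
  define gx where "gx = (norm (x k - xs))\<^sup>2 + (norm (x (k-1) - xs))\<^sup>2"
  define gl where "gl = (norm (lam k - ls))\<^sup>2 + (norm (lam (k-1) - ls))\<^sup>2"
  define Vx where "Vx = Vq \<eta> t x xs k"
  define Vl where "Vl = Vq \<eta> t lam ls k"
  define TF where "TF = (t k)\<^sup>2 / \<eta> * F k"
  have TF: "TF \<ge> 0" using F_nonneg[of k] eta_pos by (simp add: TF_def)
  have E: "E k = TF + Vx / cx + Vl / cl" by (simp add: E_def TF_def Vx_def Vl_def cx_def cl_def)
  have M: "M k = TF + Dx / cx + Dl / cl" by (simp add: M_def TF_def Dx_def Dl_def cx_def cl_def)
  have G: "G k = 12 * gx / cx + 12 * gl / cl" by (simp add: G_def gx_def gl_def cx_def cl_def)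
  have x1: "(Dx / 2 - 12 * gx) / cx \<le> Vx / cx" using bx(1) cx by (intro divide_right_mono) (auto simp: Dx_def gx_def Vx_def)
  have x2: "Vx / cx \<le> (3/2 * Dx + 12 * gx) / cx" using bx(2) cx by (intro divide_right_mono) (auto simp: Dx_def gx_def Vx_def)
  have l1: "(Dl / 2 - 12 * gl) / cl \<le> Vl / cl" using bl(1) cl by (intro divide_right_mono) (auto simp: Dl_def gl_def Vl_def)
  have l2: "Vl / cl \<le> (3/2 * Dl + 12 * gl) / cl" using bl(2) cl by (intro divide_right_mono) (auto simp: Dl_def gl_def Vl_def)
  have s1: "(Dx / 2 - 12 * gx) / cx = (Dx / cx) / 2 - 12 * gx / cx" by (simp add: diff_divide_distrib)
  have s2: "(3/2 * Dx + 12 * gx) / cx = 3/2 * (Dx / cx) + 12 * gx / cx" by (simp add: add_divide_distrib)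
  have s3: "(Dl / 2 - 12 * gl) / cl = (Dl / cl) / 2 - 12 * gl / cl" by (simp add: diff_divide_distrib)
  have s4: "(3/2 * Dl + 12 * gl) / cl = 3/2 * (Dl / cl) + 12 * gl / cl" by (simp add: add_divide_distrib)
  define u1 where "u1 = Dx / cx"
  define u2 where "u2 = Dl / cl"
  define u3 where "u3 = 12 * gx / cx"
  define u4 where "u4 = 12 * gl / cl"
  define u5 where "u5 = Vx / cx"
  define u6 where "u6 = Vl / cl"
  have x1': "u1 / 2 - u3 \<le> u5" using x1 s1 by (simp add: u1_def u3_def u5_def)
  have x2': "u5 \<le> 3/2 * u1 + u3" using x2 s2 by (simp add: u1_def u3_def u5_def)
  have l1': "u2 / 2 - u4 \<le> u6" using l1 s3 by (simp add: u2_def u4_def u6_def)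
  have l2': "u6 \<le> 3/2 * u2 + u4" using l2 s4 by (simp add: u2_def u4_def u6_def)
  have E': "E k = TF + u5 + u6" using E by (simp add: u5_def u6_def)
  have M': "M k = TF + u1 + u2" using M by (simp add: u1_def u2_def)
  have G': "G k = u3 + u4" using G by (simp add: u3_def u4_def)
  show "M k / 2 - G k \<le> E k" unfolding E' M' G' using x1' l1' TF by argo
  show "E k \<le> 3/2 * M k + G k" unfolding E' M' G' using x2' l2' TF by argo
qed

lemma M_le_a:
  assumes k: "k \<ge> 1"
  shows "M k \<le> (1 / (\<eta> - \<rho>) + 1 / (1 - \<eta>)) * t k * acoef k"
proof -
  have tk: "t k \<ge> 1" by (rule t_ge1[OF k])
  have ep: "\<eta> > 0" by (rule eta_pos)
  have er: "\<eta> - \<rho> > 0" and e1: "1 - \<eta> > 0" using eta by auto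
  define a1 where "a1 = (\<eta> - \<rho>) / \<eta> * t k * F k"
  define a2 where "a2 = (1 - \<eta>) / (2 * \<eta> * \<gamma>) * (t k - 1) * (norm (x k - x (k-1)))\<^sup>2"
  define a3 where "a3 = (1 - \<eta>) / (2 * \<eta> * \<delta>) * (t k - 1) * (norm (lam k - lam (k-1)))\<^sup>2"
  have a1: "a1 \<ge> 0" using F_nonneg[of k] er ep tk by (simp add: a1_def)
  have a2: "a2 \<ge> 0" using e1 ep gamma tk by (simp add: a2_def)
  have a3: "a3 \<ge> 0" using e1 ep delta tk by (simp add: a3_def)
  have m1: "(t k)\<^sup>2 / \<eta> * F k = t k * (1 / (\<eta> - \<rho>) * a1)"
    using er ep by (simp add: a1_def power2_eq_square field_simps)
  have m2: "((t k - 1) * norm (x k - x (k-1)))\<^sup>2 / (2 * \<eta> * \<gamma>) \<le> t k * (1 / (1 - \<eta>) * a2)"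
  proof -
    have "((t k - 1) * norm (x k - x (k-1)))\<^sup>2 / (2 * \<eta> * \<gamma>)
        = (t k - 1) * ((t k - 1) * (norm (x k - x (k-1)))\<^sup>2 / (2 * \<eta> * \<gamma>))"
      by (simp add: power2_eq_square field_simps)
    also have "\<dots> \<le> t k * ((t k - 1) * (norm (x k - x (k-1)))\<^sup>2 / (2 * \<eta> * \<gamma>))"
      using tk ep gamma by (intro mult_right_mono) auto
    also have "(t k - 1) * (norm (x k - x (k-1)))\<^sup>2 / (2 * \<eta> * \<gamma>) = 1 / (1 - \<eta>) * a2"
    proof -
      have "a2 = (1 - \<eta>) * ((t k - 1) * (norm (x k - x (k-1)))\<^sup>2 / (2 * \<eta> * \<gamma>))"
        by (simp add: a2_def)
      thus ?thesis using e1 by simp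
    qed
    finally show ?thesis .
  qed
  have m3: "((t k - 1) * norm (lam k - lam (k-1)))\<^sup>2 / (2 * \<eta> * \<delta>) \<le> t k * (1 / (1 - \<eta>) * a3)"
  proof -
    have "((t k - 1) * norm (lam k - lam (k-1)))\<^sup>2 / (2 * \<eta> * \<delta>)
        = (t k - 1) * ((t k - 1) * (norm (lam k - lam (k-1)))\<^sup>2 / (2 * \<eta> * \<delta>))"
      by (simp add: power2_eq_square field_simps)
    also have "\<dots> \<le> t k * ((t k - 1) * (norm (lam k - lam (k-1)))\<^sup>2 / (2 * \<eta> * \<delta>))"
      using tk ep delta by (intro mult_right_mono) auto
    also have "(t k - 1) * (norm (lam k - lam (k-1)))\<^sup>2 / (2 * \<eta> * \<delta>) = 1 / (1 - \<eta>) * a3"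
    proof -
      have "a3 = (1 - \<eta>) * ((t k - 1) * (norm (lam k - lam (k-1)))\<^sup>2 / (2 * \<eta> * \<delta>))"
        by (simp add: a3_def)
      thus ?thesis using e1 by simp
    qed
    finally show ?thesis .
  qed
  define C where "C = 1 / (\<eta> - \<rho>) + 1 / (1 - \<eta>)"
  have c1: "1 / (\<eta> - \<rho>) * a1 \<le> C * a1" using a1 e1 by (intro mult_right_mono) (auto simp: C_def)
  have c2: "1 / (1 - \<eta>) * a2 \<le> C * a2" using a2 er by (intro mult_right_mono) (auto simp: C_def)
  have c3: "1 / (1 - \<eta>) * a3 \<le> C * a3" using a3 er by (intro mult_right_mono) (auto simp: C_def)
  have "M k \<le> t k * (1 / (\<eta> - \<rho>) * a1) + t k * (1 / (1 - \<eta>) * a2) + t k * (1 / (1 - \<eta>) * a3)"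
    unfolding M_def using m1 m2 m3 by linarith
  also have "\<dots> \<le> t k * (C * a1) + t k * (C * a2) + t k * (C * a3)"
    using c1 c2 c3 tk by (intro add_mono mult_left_mono) auto
  also have "\<dots> = C * t k * acoef k" by (simp add: acoef_def a1_def a2_def a3_def algebra_simps)
  finally show ?thesis by (simp add: C_def)
qed

end

locale aalm2 = aalm f gradf A b t \<rho> \<eta> \<gamma> \<delta> \<beta> x lam xs ls
  for f :: "real^'n \<Rightarrow> real" and gradf :: "real^'n \<Rightarrow> real^'n"
    and A :: "real^'n^'m" and b :: "real^'m"
    and t :: "nat \<Rightarrow> real" and \<rho> \<eta> \<gamma> \<delta> \<beta> :: real
    and x :: "nat \<Rightarrow> real^'n" and lam :: "nat \<Rightarrow> real^'m"
    and xs :: "real^'n" and ls :: "real^'m" +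
  assumes conv: "(\<lambda>k. (x k, lam k)) \<longlonglongrightarrow> (xs, ls)"
begin

lemma xlim: "x \<longlonglongrightarrow> xs" using tendsto_fst[OF conv] by simp
lemma llim: "lam \<longlonglongrightarrow> ls" using tendsto_snd[OF conv] by simp

lemma shift_lim:
  fixes z :: "nat \<Rightarrow> 'a::topological_space"
  assumes "z \<longlonglongrightarrow> l" shows "(\<lambda>k. z (k - 1)) \<longlonglongrightarrow> l"
  using filterlim_compose[OF assms filterlim_minus_const_nat_at_top[of 1]] by (simp add: o_def)

lemma dist_lim:
  fixes z :: "nat \<Rightarrow> 'a::real_normed_vector"
  assumes "z \<longlonglongrightarrow> l" shows "(\<lambda>k. norm (z k - l)) \<longlonglongrightarrow> 0"
  using tendsto_norm_zero[OF LIM_zero[OF assms]] .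

lemma diff_lim:
  fixes z :: "nat \<Rightarrow> 'a::real_normed_vector"
  assumes "z \<longlonglongrightarrow> l" shows "(\<lambda>k. norm (z k - z (k - 1))) \<longlonglongrightarrow> 0"
proof -
  have "(\<lambda>k. z k - z (k - 1)) \<longlonglongrightarrow> l - l" by (intro tendsto_diff assms shift_lim)
  thus ?thesis using tendsto_norm_zero by force
qed

lemma G_lim: "G \<longlonglongrightarrow> 0"
proof -
  have "G \<longlonglongrightarrow> 12 * (0\<^sup>2 + 0\<^sup>2) / (2 * \<eta> * \<gamma>) + 12 * (0\<^sup>2 + 0\<^sup>2) / (2 * \<eta> * \<delta>)"
    unfolding G_def[abs_def]
    by (intro tendsto_intros dist_lim xlim llim shift_lim) (use eta_pos gamma delta in auto)
  thus ?thesis by simp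
qed

lemma M_lim: "M \<longlonglongrightarrow> 0"
proof (rule LIMSEQ_I)
  fix r :: real assume r: "r > 0"
  define C where "C = 1 / (\<eta> - \<rho>) + 1 / (1 - \<eta>)"
  have "1 / (\<eta> - \<rho>) > 0" "1 / (1 - \<eta>) > 0" using eta by auto
  hence C: "C > 0" unfolding C_def by linarith
  obtain N0 where N0: "\<And>k. k \<ge> N0 \<Longrightarrow> norm (G k) < r / 8"
    using LIMSEQ_D[OF G_lim, of "r/8"] r by auto
  define N1 where "N1 = max N0 1"
  have N1: "N1 \<ge> N0" "N1 \<ge> 1" by (auto simp: N1_def)
  have Gs: "G k < r / 8" if "k \<ge> N1" for k using N0[of k] that N1 G_nonneg[of k] by auto
  have "\<exists>N\<ge>N1. M N < r / 8"
  proof (rule ccontr)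
    assume "\<not> (\<exists>N\<ge>N1. M N < r / 8)"
    hence Mb: "\<And>k. k \<ge> N1 \<Longrightarrow> M k \<ge> r / 8" by force
    show False
    proof (rule div_contra[of N1 acoef "r / 8 / C"])
      show "0 \<le> acoef k" if "k \<ge> N1" for k using acoef_nonneg that N1 by auto
      show "r / 8 / C / real k \<le> acoef k" if k: "k \<ge> N1" for k
      proof -
        have k1: "k \<ge> 1" using k N1 by auto
        have tk: "t k \<le> real k" "t k > 0" using t_le_k[OF k1] t_pos[OF k1] by auto
        have "r / 8 \<le> C * t k * acoef k" using Mb[OF k] M_le_a[OF k1] unfolding C_def by linarith
        also have "\<dots> \<le> C * real k * acoef k"
          using tk C acoef_nonneg[OF k1] by (intro mult_right_mono mult_left_mono) auto
        finally have "r / 8 \<le> C * real k * acoef k" .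
        thus ?thesis using C k1 by (simp add: field_simps)
      qed
      show "N1 \<ge> 1" by (rule N1(2))
      show "r / 8 / C > 0" using r C by simp
      show "(\<Sum>k\<in>{N1..K}. acoef k) \<le> \<bar>E N1 - (- (r / 8))\<bar>" for K
      proof (rule tele_bound)
        show "acoef k \<le> E k - E (Suc k)" if "k \<ge> N1" for k using E_step[of k] that N1 by auto
        show "E k \<ge> - (r / 8)" if "k \<ge> N1" for k
          using E_bounds(1)[of k] M_nonneg[of k] Gs[OF that] that N1 by auto
      qed
    qed
  qed
  then obtain N where N: "N \<ge> N1" "M N < r / 8" by auto
  show "\<exists>no. \<forall>n\<ge>no. norm (M n - 0) < r"
  proof (intro exI allI impI)
    fix n assume n: "n \<ge> N"
    have n1: "n \<ge> 1" "N \<ge> 1" using n N N1 by auto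
    have "E n \<le> E N"
    proof (rule noninc_from[OF _ n])
      fix k assume "k \<ge> N"
      hence k1: "k \<ge> 1" using N N1 by auto
      show "E (Suc k) \<le> E k" using E_step[OF k1] acoef_nonneg[OF k1] by linarith
    qed
    hence "M n \<le> 2 * (3/2 * M N + G N + G n)"
      using E_bounds(1)[OF n1(1)] E_bounds(2)[OF n1(2)] by argo
    moreover have "G N < r / 8" "G n < r / 8" using Gs N n by auto
    ultimately have "M n < r" using N(2) r by argo
    thus "norm (M n - 0) < r" using M_nonneg[OF n1(1)] by simp
  qed
qed

lemma sq_dom_lim:
  fixes g :: "nat \<Rightarrow> real"
  assumes "\<And>k. k \<ge> 1 \<Longrightarrow> (g k)\<^sup>2 \<le> c * M k" and "c > 0"
  shows "g \<longlonglongrightarrow> 0"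
proof (rule Lim_null_comparison)
  show "\<forall>\<^sub>F k in sequentially. norm (g k) \<le> sqrt (c * M k)"
    using eventually_ge_at_top[of 1]
  proof eventually_elim
    case (elim k)
    have "sqrt ((g k)\<^sup>2) \<le> sqrt (c * M k)" using assms(1)[OF elim] by (rule real_sqrt_le_mono)
    thus ?case by simp
  qed
  have "(\<lambda>k. sqrt (c * M k)) \<longlonglongrightarrow> sqrt (c * 0)" by (intro tendsto_intros M_lim)
  thus "(\<lambda>k. sqrt (c * M k)) \<longlonglongrightarrow> 0" by simp
qed

lemma tF_lim: "(\<lambda>k. (t k)\<^sup>2 * F k) \<longlonglongrightarrow> 0"
proof (rule Lim_null_comparison)
  show "\<forall>\<^sub>F k in sequentially. norm ((t k)\<^sup>2 * F k) \<le> \<eta> * M k"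
    using eventually_ge_at_top[of 1]
  proof eventually_elim
    case (elim k)
    have "(t k)\<^sup>2 / \<eta> * F k \<le> M k" unfolding M_def using eta_pos gamma delta by simp
    hence h: "\<eta> * ((t k)\<^sup>2 / \<eta> * F k) \<le> \<eta> * M k" by (rule mult_left_mono) (use eta_pos in simp)
    have "\<eta> * ((t k)\<^sup>2 / \<eta> * F k) = (t k)\<^sup>2 * F k" using eta_pos by simp
    thus ?case using h F_nonneg[of k] by simp
  qed
  have "(\<lambda>k. \<eta> * M k) \<longlonglongrightarrow> \<eta> * 0" by (intro tendsto_intros M_lim)
  thus "(\<lambda>k. \<eta> * M k) \<longlonglongrightarrow> 0" by simp
qed

lemma Dx_lim: "(\<lambda>k. (t k - 1) * norm (x k - x (k-1))) \<longlonglongrightarrow> 0"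
proof (rule sq_dom_lim)
  show "((t k - 1) * norm (x k - x (k-1)))\<^sup>2 \<le> (2 * \<eta> * \<gamma>) * M k" if "k \<ge> 1" for k
  proof -
    have "((t k - 1) * norm (x k - x (k-1)))\<^sup>2 / (2 * \<eta> * \<gamma>) \<le> M k"
      unfolding M_def using eta_pos gamma delta F_nonneg[of k] by simp
    thus ?thesis using eta_pos gamma by (simp add: field_simps)
  qed
  show "2 * \<eta> * \<gamma> > 0" using eta_pos gamma by simp
qed

lemma Dl_lim: "(\<lambda>k. (t k - 1) * norm (lam k - lam (k-1))) \<longlonglongrightarrow> 0"
proof (rule sq_dom_lim)
  show "((t k - 1) * norm (lam k - lam (k-1)))\<^sup>2 \<le> (2 * \<eta> * \<delta>) * M k" if "k \<ge> 1" for k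
  proof -
    have "((t k - 1) * norm (lam k - lam (k-1)))\<^sup>2 / (2 * \<eta> * \<delta>) \<le> M k"
      unfolding M_def using eta_pos gamma delta F_nonneg[of k] by simp
    thus ?thesis using eta_pos delta by (simp add: field_simps)
  qed
  show "2 * \<eta> * \<delta> > 0" using eta_pos delta by simp
qed

lemma tdx_lim: "(\<lambda>k. t k * norm (x k - x (k-1))) \<longlonglongrightarrow> 0"
proof -
  have "(\<lambda>k. (t k - 1) * norm (x k - x (k-1)) + norm (x k - x (k-1))) \<longlonglongrightarrow> 0 + 0"
    by (intro tendsto_add Dx_lim diff_lim[OF xlim])
  thus ?thesis by (simp add: algebra_simps)
qed

lemma tdl_lim: "(\<lambda>k. t k * norm (lam k - lam (k-1))) \<longlonglongrightarrow> 0"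
proof -
  have "(\<lambda>k. (t k - 1) * norm (lam k - lam (k-1)) + norm (lam k - lam (k-1))) \<longlonglongrightarrow> 0 + 0"
    by (intro tendsto_add Dl_lim diff_lim[OF llim])
  thus ?thesis by (simp add: algebra_simps)
qed

end

context aalm2
begin

definition "nu k = lam (k-1) + t k *\<^sub>R (lam k - lam (k-1))"
definition "ee k = A *v x k - b"
definition "ss k = (t k)\<^sup>2 *\<^sub>R ee k"
definition "uu k = ss k - (\<eta> / \<delta>) *\<^sub>R nu k"
definition "g0 = - ((\<eta> / \<delta>) *\<^sub>R ls)"
definition "qq k = ((t k)\<^sup>2 + \<eta> * t (k+1) - (t (k+1))\<^sup>2) / (t k)\<^sup>2"

lemma nu_lim: "nu \<longlonglongrightarrow> ls"
proof -
  have "(\<lambda>k. nu k - ls) \<longlonglongrightarrow> 0"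
  proof (rule Lim_null_comparison)
    show "\<forall>\<^sub>F k in sequentially. norm (nu k - ls) \<le> norm (lam k - ls) + (t k - 1) * norm (lam k - lam (k-1))"
      using eventually_ge_at_top[of 1]
    proof eventually_elim
      case (elim k)
      have "nu k - ls = (lam k - ls) + (t k - 1) *\<^sub>R (lam k - lam (k-1))"
        by (simp add: nu_def algebra_simps)
      also have "norm \<dots> \<le> norm (lam k - ls) + norm ((t k - 1) *\<^sub>R (lam k - lam (k-1)))" by (rule norm_triangle_ineq)
      also have "norm ((t k - 1) *\<^sub>R (lam k - lam (k-1))) = (t k - 1) * norm (lam k - lam (k-1))"
        using t_ge1[OF elim] by simp
      finally show ?case .
    qed
    have "(\<lambda>k. norm (lam k - ls) + (t k - 1) * norm (lam k - lam (k-1))) \<longlonglongrightarrow> 0 + 0"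
      by (intro tendsto_add dist_lim[OF llim] Dl_lim)
    thus "(\<lambda>k. norm (lam k - ls) + (t k - 1) * norm (lam k - lam (k-1))) \<longlonglongrightarrow> 0" by simp
  qed
  thus ?thesis by (simp add: LIM_zero_iff)
qed

lemma nu_step:
  assumes k: "k \<ge> 1"
  shows "(\<eta> / \<delta>) *\<^sub>R (nu (k+1) - nu k) = (\<eta> * t (k+1)) *\<^sub>R ee k + (t (k+1))\<^sup>2 *\<^sub>R (ee (k+1) - ee k)"
proof -
  define \<tau> where "\<tau> = t (k+1)"
  have tau0: "\<tau> > 0" using t_pos[of "k+1"] by (simp add: \<tau>_def)
  have "nu (k+1) - nu k = \<tau> *\<^sub>R (lam (k+1) - extrap t lam k)"
    unfolding nu_def \<tau>_def using extrap_diff[of t k lam] tau0 \<tau>_def by simp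
  also have "lam (k+1) - extrap t lam k = \<delta> *\<^sub>R (A *v W k - b)"
    using lam_update[OF k] AW_eq[of k] by simp
  also have "A *v W k - b = ee k + (\<tau> / \<eta>) *\<^sub>R (ee (k+1) - ee k)"
    by (simp add: W_def c_k_def \<tau>_def ee_def algebra_simps)
  finally have "(\<eta> / \<delta>) *\<^sub>R (nu (k+1) - nu k) = ((\<eta> / \<delta>) * \<tau> * \<delta>) *\<^sub>R (ee k + (\<tau> / \<eta>) *\<^sub>R (ee (k+1) - ee k))"
    by simp
  also have "(\<eta> / \<delta>) * \<tau> * \<delta> = \<eta> * \<tau>" using delta by simp
  also have "(\<eta> * \<tau>) *\<^sub>R (ee k + (\<tau> / \<eta>) *\<^sub>R (ee (k+1) - ee k)) = (\<eta> * \<tau>) *\<^sub>R ee k + (\<eta> * \<tau> * (\<tau> / \<eta>)) *\<^sub>R (ee (k+1) - ee k)"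
    by (simp add: scaleR_add_right)
  also have "\<eta> * \<tau> * (\<tau> / \<eta>) = \<tau>\<^sup>2" using eta_pos by (simp add: power2_eq_square)
  finally show ?thesis by (simp add: \<tau>_def)
qed

lemma uu_step:
  assumes k: "k \<ge> 1"
  shows "uu (k+1) - g0 = (1 - qq k) *\<^sub>R (uu k - g0) - (qq k * (\<eta> / \<delta>)) *\<^sub>R (nu k - ls)"
proof -
  define \<tau> where "\<tau> = t (k+1)"
  have tk: "t k > 0" by (rule t_pos[OF k])
  have q: "(1 - qq k) * (t k)\<^sup>2 = \<tau>\<^sup>2 - \<eta> * \<tau>" using tk by (simp add: qq_def \<tau>_def field_simps)
  have nu1: "(\<eta> / \<delta>) *\<^sub>R nu (k+1) = (\<eta> / \<delta>) *\<^sub>R nu k + (\<eta> * \<tau>) *\<^sub>R ee k + \<tau>\<^sup>2 *\<^sub>R (ee (k+1) - ee k)"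
    using nu_step[OF k] by (simp add: \<tau>_def algebra_simps)
  have "uu (k+1) - g0 = (\<tau>\<^sup>2 - \<eta> * \<tau>) *\<^sub>R ee k - (\<eta> / \<delta>) *\<^sub>R nu k + (\<eta> / \<delta>) *\<^sub>R ls"
    unfolding uu_def ss_def g0_def using nu1 by (simp add: \<tau>_def algebra_simps)
  also have "\<dots> = ((1 - qq k) * (t k)\<^sup>2) *\<^sub>R ee k - (\<eta> / \<delta>) *\<^sub>R nu k + (\<eta> / \<delta>) *\<^sub>R ls" by (simp only: q)
  also have "\<dots> = (1 - qq k) *\<^sub>R (uu k - g0) - (qq k * (\<eta> / \<delta>)) *\<^sub>R (nu k - ls)"
    unfolding uu_def ss_def g0_def by (simp add: algebra_simps)
  finally show ?thesis .
qed

lemma qq_bounds: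
  assumes k: "k \<ge> 1"
  shows "qq k \<le> 1" "(\<eta> - \<rho>) / real k \<le> qq k" "0 \<le> qq k"
proof -
  define \<tau> where "\<tau> = t (k+1)"
  have tk: "t k \<ge> 1" by (rule t_ge1[OF k])
  have tau: "\<tau> \<ge> t k" using t_mono[OF k] by (simp add: \<tau>_def)
  have r: "\<tau>\<^sup>2 - (t k)\<^sup>2 \<le> \<rho> * \<tau>" using t_rate[OF k] by (simp add: \<tau>_def)
  have tsq: "(t k)\<^sup>2 > 0" using tk by simp
  have "\<eta> * \<tau> \<le> \<tau> * \<tau>" using tau tk eta by (intro mult_right_mono) auto
  hence "(t k)\<^sup>2 + \<eta> * \<tau> - \<tau>\<^sup>2 \<le> (t k)\<^sup>2" by (simp add: power2_eq_square)
  thus "qq k \<le> 1" using tsq by (simp add: qq_def \<tau>_def)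
  have num: "(\<eta> - \<rho>) * t k \<le> (t k)\<^sup>2 + \<eta> * \<tau> - \<tau>\<^sup>2"
  proof -
    have "(\<eta> - \<rho>) * t k \<le> (\<eta> - \<rho>) * \<tau>" using tau eta by (intro mult_left_mono) auto
    thus ?thesis using r by (simp add: algebra_simps)
  qed
  have "(\<eta> - \<rho>) / real k \<le> (\<eta> - \<rho>) / t k"
    using t_le_k[OF k] tk eta by (intro divide_left_mono) auto
  also have "\<dots> = (\<eta> - \<rho>) * t k / (t k)\<^sup>2" using tk by (simp add: power2_eq_square)
  also have "\<dots> \<le> qq k" unfolding qq_def \<tau>_def[symmetric] using num tsq by (intro divide_right_mono) auto
  finally show "(\<eta> - \<rho>) / real k \<le> qq k" .
  moreover have "(\<eta> - \<rho>) / real k \<ge> 0" using eta by simp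
  ultimately show "0 \<le> qq k" by linarith
qed

lemma ss_lim: "ss \<longlonglongrightarrow> 0"
proof -
  have "(\<lambda>k. norm (uu k - g0)) \<longlonglongrightarrow> 0"
  proof (rule avg_lemma[of 1 _ qq "\<lambda>k. (\<eta> / \<delta>) * norm (nu k - ls)" "\<eta> - \<rho>"])
    fix k :: nat assume k: "k \<ge> 1"
    note qb = qq_bounds[OF k]
    have "norm (uu (Suc k) - g0) = norm ((1 - qq k) *\<^sub>R (uu k - g0) - (qq k * (\<eta> / \<delta>)) *\<^sub>R (nu k - ls))"
      using uu_step[OF k] by simp
    also have "\<dots> \<le> norm ((1 - qq k) *\<^sub>R (uu k - g0)) + norm ((qq k * (\<eta> / \<delta>)) *\<^sub>R (nu k - ls))"
      by (rule norm_triangle_ineq4)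
    also have "\<dots> = (1 - qq k) * norm (uu k - g0) + qq k * ((\<eta> / \<delta>) * norm (nu k - ls))"
      using qb eta_pos delta by (simp add: abs_mult)
    finally show "norm (uu (Suc k) - g0) \<le> (1 - qq k) * norm (uu k - g0) + qq k * ((\<eta> / \<delta>) * norm (nu k - ls))" .
    show "0 \<le> qq k" "qq k \<le> 1" "(\<eta> - \<rho>) / real k \<le> qq k" using qb by auto
  next
    show "\<eta> - \<rho> > 0" using eta by simp
    have "(\<lambda>k. (\<eta> / \<delta>) * norm (nu k - ls)) \<longlonglongrightarrow> (\<eta> / \<delta>) * 0"
      by (intro tendsto_intros dist_lim[OF nu_lim])
    thus "(\<lambda>k. (\<eta> / \<delta>) * norm (nu k - ls)) \<longlonglongrightarrow> 0" by simp
  qed auto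
  hence "uu \<longlonglongrightarrow> g0" by (simp add: tendsto_norm_zero_iff LIM_zero_iff)
  hence "(\<lambda>k. uu k + (\<eta> / \<delta>) *\<^sub>R nu k) \<longlonglongrightarrow> g0 + (\<eta> / \<delta>) *\<^sub>R ls"
    by (intro tendsto_intros nu_lim)
  moreover have "(\<lambda>k. uu k + (\<eta> / \<delta>) *\<^sub>R nu k) = ss" by (rule ext) (simp add: uu_def)
  ultimately show ?thesis by (simp add: g0_def)
qed

lemma res_lim: "(\<lambda>k. (t k)\<^sup>2 * norm (A *v x k - b)) \<longlonglongrightarrow> 0"
proof -
  have "(\<lambda>k. norm (ss k)) \<longlonglongrightarrow> 0" using tendsto_norm_zero[OF ss_lim] .
  thus ?thesis by (simp add: ss_def ee_def)
qed

end

lemma o_inv_sq: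
  fixes g :: "nat \<Rightarrow> real"
  assumes "(\<lambda>k. g k * (t k)\<^sup>2) \<longlonglongrightarrow> 0" "\<forall>\<^sub>F k in sequentially. t k \<noteq> 0"
  shows "g \<in> o(\<lambda>k. 1 / (t k)\<^sup>2)"
proof (rule smalloI_tendsto)
  show "(\<lambda>k. g k / (1 / (t k)\<^sup>2)) \<longlonglongrightarrow> 0" using assms(1) by simp
  show "\<forall>\<^sub>F k in sequentially. 1 / (t k)\<^sup>2 \<noteq> 0" using assms(2) by (auto elim: eventually_mono)
qed

lemma o_inv:
  fixes g :: "nat \<Rightarrow> real"
  assumes "(\<lambda>k. g k * t k) \<longlonglongrightarrow> 0" "\<forall>\<^sub>F k in sequentially. t k \<noteq> 0"
  shows "g \<in> o(\<lambda>k. 1 / t k)"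
proof (rule smalloI_tendsto)
  show "(\<lambda>k. g k / (1 / t k)) \<longlonglongrightarrow> 0" using assms(1) by simp
  show "\<forall>\<^sub>F k in sequentially. 1 / t k \<noteq> 0" using assms(2) by (auto elim: eventually_mono)
qed

theorem theorem4p3:
  fixes f :: "real^'n \<Rightarrow> real" and gradf :: "real^'n \<Rightarrow> real^'n"
    and A :: "real^'n^'m" and b :: "real^'m"
    and t :: "nat \<Rightarrow> real" and \<rho> \<eta> \<gamma> \<delta> \<beta> :: real
    and x :: "nat \<Rightarrow> real^'n" and lam :: "nat \<Rightarrow> real^'m"
    and xs :: "real^'n" and ls :: "real^'m"
  assumes f_convex: "convex_on UNIV f"
    and f_grad: "\<And>z. (f has_derivative (\<lambda>h. gradf z \<bullet> h)) (at z)"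
    and f_C1: "continuous_on UNIV gradf"
    and Omega_ne: "kkt_set gradf A b \<noteq> {}"
    and t_mono: "\<And>k. k \<ge> 1 \<Longrightarrow> t k \<le> t (k + 1)"
    and t1: "t 1 = 1"
    and t_gt1: "\<And>k. k > 2 \<Longrightarrow> t k > 1"
    and t_inf: "filterlim t at_top sequentially"
    and t_rate: "\<And>k. k \<ge> 1 \<Longrightarrow> (t (k + 1))\<^sup>2 - (t k)\<^sup>2 \<le> \<rho> * t (k + 1)"
    and rho: "0 < \<rho>" "\<rho> < 1"
    and eta: "\<rho> < \<eta>" "\<eta> < 1"
    and gamma: "\<gamma> > 0" and delta: "\<delta> > 0" and beta: "\<beta> \<ge> 0"
    and init: "x 0 = x 1" "lam 0 = lam 1"
    and x_update:
      "(\<forall>k\<ge>1. \<forall>y. subproblem_obj f A b \<beta> \<gamma> \<delta> \<eta> t x lam k (x (k + 1))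
                    \<le> subproblem_obj f A b \<beta> \<gamma> \<delta> \<eta> t x lam k y)
       \<or> (\<exists>L>0. (\<forall>u v. norm (gradf u - gradf v) \<le> L * norm (u - v)) \<and> \<gamma> \<le> 1 / L \<and>
           (\<forall>k\<ge>1. \<forall>y.
              subproblem_obj (\<lambda>z. gradf (extrap t x k) \<bullet> z) A b \<beta> \<gamma> \<delta> \<eta> t x lam k (x (k + 1))
              \<le> subproblem_obj (\<lambda>z. gradf (extrap t x k) \<bullet> z) A b \<beta> \<gamma> \<delta> \<eta> t x lam k y))"
    and lam_update: "\<And>k. k \<ge> 1 \<Longrightarrow>
       lam (k + 1) = extrap t lam k
         + \<delta> *\<^sub>R (c_k \<eta> t k *\<^sub>R (A *v x (k + 1)) - r_k \<eta> t A b x k)"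
    and limit_kkt: "(xs, ls) \<in> kkt_set gradf A b"
    and conv: "(\<lambda>k. (x k, lam k)) \<longlonglongrightarrow> (xs, ls)"
  shows "(\<lambda>k. aug_lag f A b \<beta> (x k) ls - aug_lag f A b \<beta> xs ls) \<in> o(\<lambda>k. 1 / (t k)\<^sup>2) \<and>
         (\<lambda>k. norm ((x k, lam k) - (x (k - 1), lam (k - 1)))) \<in> o(\<lambda>k. 1 / t k) \<and>
         (\<lambda>k. norm (A *v x k - b)) \<in> o(\<lambda>k. 1 / (t k)\<^sup>2) \<and>
         (\<lambda>k. \<bar>f (x k) - f xs\<bar>) \<in> o(\<lambda>k. 1 / (t k)\<^sup>2)"
proof -
  interpret aalm2 f gradf A b t \<rho> \<eta> \<gamma> \<delta> \<beta> x lam xs ls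
    by (intro aalm2.intro aalm.intro aalm2_axioms.intro) (fact assms)+
  have tnz: "\<forall>\<^sub>F k in sequentially. t k \<noteq> 0"
    using eventually_ge_at_top[of 1] by eventually_elim (use t_pos in force)
  have e1: "\<forall>\<^sub>F k in sequentially. k \<ge> (1::nat)" by (rule eventually_ge_at_top)
  have F_eq: "aug_lag f A b \<beta> (x k) ls - aug_lag f A b \<beta> xs ls = F k" for k
    by (simp add: aug_lag_def F_def Axs)
  have c1: "(\<lambda>k. aug_lag f A b \<beta> (x k) ls - aug_lag f A b \<beta> xs ls) \<in> o(\<lambda>k. 1 / (t k)\<^sup>2)"
    unfolding F_eq by (rule o_inv_sq[OF _ tnz]) (use tF_lim in \<open>simp add: mult.commute\<close>)
  have c2: "(\<lambda>k. norm ((x k, lam k) - (x (k - 1), lam (k - 1)))) \<in> o(\<lambda>k. 1 / t k)"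
  proof (rule o_inv[OF _ tnz])
    show "(\<lambda>k. norm ((x k, lam k) - (x (k - 1), lam (k - 1))) * t k) \<longlonglongrightarrow> 0"
    proof (rule Lim_null_comparison)
      show "\<forall>\<^sub>F k in sequentially. norm (norm ((x k, lam k) - (x (k - 1), lam (k - 1))) * t k)
              \<le> t k * norm (x k - x (k-1)) + t k * norm (lam k - lam (k-1))"
        using e1
      proof eventually_elim
        case (elim k)
        have tk: "t k > 0" using t_pos[OF elim] .
        have "norm (norm ((x k, lam k) - (x (k - 1), lam (k - 1))) * t k)
             = t k * norm (x k - x (k-1), lam k - lam (k-1))" using tk by simp
        also have "\<dots> \<le> t k * (norm (x k - x (k-1)) + norm (lam k - lam (k-1)))"
          using tk by (intro mult_left_mono norm_Pair_le) auto
        finally show ?case by (simp add: algebra_simps)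
      qed
      show "(\<lambda>k. t k * norm (x k - x (k-1)) + t k * norm (lam k - lam (k-1))) \<longlonglongrightarrow> 0"
        using tendsto_add[OF tdx_lim tdl_lim] by simp
    qed
  qed
  have c3: "(\<lambda>k. norm (A *v x k - b)) \<in> o(\<lambda>k. 1 / (t k)\<^sup>2)"
    by (rule o_inv_sq[OF _ tnz]) (use res_lim in \<open>simp add: mult.commute\<close>)
  have elim0: "(\<lambda>k. norm (A *v x k - b)) \<longlonglongrightarrow> 0"
  proof (rule Lim_null_comparison)
    show "\<forall>\<^sub>F k in sequentially. norm (norm (A *v x k - b)) \<le> (t k)\<^sup>2 * norm (A *v x k - b)"
      using e1
    proof eventually_elim
      case (elim k)
      have h: "1 \<le> (t k)\<^sup>2" using t_ge1[OF elim] by (simp add: one_le_power)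
      show ?case using mult_right_mono[OF h, of "norm (A *v x k - b)"] by simp
    qed
  qed (rule res_lim)
  have c4: "(\<lambda>k. \<bar>f (x k) - f xs\<bar>) \<in> o(\<lambda>k. 1 / (t k)\<^sup>2)"
  proof (rule o_inv_sq[OF _ tnz])
    show "(\<lambda>k. \<bar>f (x k) - f xs\<bar> * (t k)\<^sup>2) \<longlonglongrightarrow> 0"
    proof (rule Lim_null_comparison)
      show "\<forall>\<^sub>F k in sequentially. norm (\<bar>f (x k) - f xs\<bar> * (t k)\<^sup>2)
          \<le> (t k)\<^sup>2 * F k + norm ls * ((t k)\<^sup>2 * norm (A *v x k - b))
             + \<beta> / 2 * (((t k)\<^sup>2 * norm (A *v x k - b)) * norm (A *v x k - b))"
      proof (intro always_eventually allI)
        fix k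
        define e where "e = A *v x k - b"
        have fe: "f (x k) - f xs = F k - ls \<bullet> e - \<beta> / 2 * (norm e)\<^sup>2" by (simp add: F_def e_def)
        have "\<bar>f (x k) - f xs\<bar> \<le> F k + norm ls * norm e + \<beta> / 2 * (norm e)\<^sup>2"
        proof -
          have "\<bar>ls \<bullet> e\<bar> \<le> norm ls * norm e" by (rule Cauchy_Schwarz_ineq2)
          moreover have "\<beta> / 2 * (norm e)\<^sup>2 \<ge> 0" using beta by simp
          ultimately show ?thesis unfolding fe using F_nonneg[of k] by linarith
        qed
        hence "\<bar>f (x k) - f xs\<bar> * (t k)\<^sup>2 \<le> (F k + norm ls * norm e + \<beta> / 2 * (norm e)\<^sup>2) * (t k)\<^sup>2"
          by (rule mult_right_mono) simp
        moreover have "norm (\<bar>f (x k) - f xs\<bar> * (t k)\<^sup>2) = \<bar>f (x k) - f xs\<bar> * (t k)\<^sup>2"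
          by (simp add: abs_mult)
        ultimately have "norm (\<bar>f (x k) - f xs\<bar> * (t k)\<^sup>2) \<le> (F k + norm ls * norm e + \<beta> / 2 * (norm e)\<^sup>2) * (t k)\<^sup>2"
          by simp
        thus "norm (\<bar>f (x k) - f xs\<bar> * (t k)\<^sup>2)
          \<le> (t k)\<^sup>2 * F k + norm ls * ((t k)\<^sup>2 * norm (A *v x k - b))
             + \<beta> / 2 * (((t k)\<^sup>2 * norm (A *v x k - b)) * norm (A *v x k - b))"
          by (simp add: e_def[symmetric] power2_eq_square algebra_simps)
      qed
      have "(\<lambda>k. (t k)\<^sup>2 * F k + norm ls * ((t k)\<^sup>2 * norm (A *v x k - b))
             + \<beta> / 2 * (((t k)\<^sup>2 * norm (A *v x k - b)) * norm (A *v x k - b))) \<longlonglongrightarrow> 0 + norm ls * 0 + \<beta> / 2 * (0 * 0)"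
        by (intro tendsto_intros tF_lim res_lim elim0)
      thus "(\<lambda>k. (t k)\<^sup>2 * F k + norm ls * ((t k)\<^sup>2 * norm (A *v x k - b))
             + \<beta> / 2 * (((t k)\<^sup>2 * norm (A *v x k - b)) * norm (A *v x k - b))) \<longlonglongrightarrow> 0" by simp
    qed
  qed
  show ?thesis using c1 c2 c3 c4 by blast
qed


end
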